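(* Let $m\ge1$. The process $(X_s)_{0\le s\le t}$ with values in the dual space $W^{m,2}([0,t])^*$, given by $X_sh=\int_0^s h(u)\,\mathrm{d}Z_u$, is norm-càdlàg: for every sample path, $\|X_{s+\epsilon}-X_s\|\to0$ as $\epsilon\to0+$, and there exists $X_{s-}\in W^{m,2}([0,t])^*$ (namely $X_{s-}h=\int_0^{s-}h(u)\,\mathrm{d}Z_u$) with $\|X_{s-\epsilon}-X_{s-}\|\to0$ as $\epsilon\to0+$.
   Context: $(Z_s)_{0\le s\le t}$ is a real-valued càdlàg semimartingale, $t>0$. For weakly differentiable $h$ on $[0,t]$, stochastic integrals are defined pathwise by $\int_0^s h(u)\,\mathrm{d}Z_u:=h(s)Z_s-h(0)Z_0-\int_0^s Z_{u-}h'(u)\,\mathrm{d}u$ and $\int_0^{s-} h(u)\,\mathrm{d}Z_u:=h(s)Z_{s-}-h(0)Z_0-\int_0^s Z_{u-}h'(u)\,\mathrm{d}u$. $W^{m,2}([0,t])$ is the Sobolev space of functions $m$ times weakly differentiable with $m$-th derivative in $L_2$, equipped with a reproducing kernel Hilbert space norm equivalent to the standard Sobolev norm; $\|\cdot\|$ on the dual is the dual norm. *)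

theory Defs
  imports "HOL-Analysis.Analysis"
begin

definition test_fun :: "real \<Rightarrow> (real \<Rightarrow> real) \<Rightarrow> bool" where
  "test_fun t \<phi> \<longleftrightarrow>
     (\<forall>k x. ((deriv ^^ k) \<phi>) differentiable (at x)) \<and>
     (\<exists>a b. 0 < a \<and> a \<le> b \<and> b < t \<and> (\<forall>x. x \<notin> {a..b} \<longrightarrow> \<phi> x = 0))"

definition weak_deriv :: "real \<Rightarrow> (real \<Rightarrow> real) \<Rightarrow> (real \<Rightarrow> real) \<Rightarrow> bool" where
  "weak_deriv t f g \<longleftrightarrow>
     set_integrable lborel {0..t} f \<and> set_integrable lborel {0..t} g \<and>
     (\<forall>\<phi>. test_fun t \<phi> \<longrightarrow>
        (LINT u:{0..t}|lborel. f u * deriv \<phi> u) = - (LINT u:{0..t}|lborel. g u * \<phi> u))"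

definition sob_derivs :: "real \<Rightarrow> nat \<Rightarrow> (real \<Rightarrow> real) \<Rightarrow> (nat \<Rightarrow> real \<Rightarrow> real) \<Rightarrow> bool" where
  "sob_derivs t m h D \<longleftrightarrow>
     D 0 = h \<and> (\<forall>k<m. weak_deriv t (D k) (D (Suc k))) \<and>
     (\<forall>k\<le>m. set_borel_measurable lborel {0..t} (D k) \<and>
             set_integrable lborel {0..t} (\<lambda>u. (D k u)\<^sup>2))"

(* Sobolev space W^{m,2}([0,t]); elements are taken as their continuous representatives *)
definition sobolev :: "real \<Rightarrow> nat \<Rightarrow> (real \<Rightarrow> real) set" where
  "sobolev t m = {h. continuous_on {0..t} h \<and> (\<exists>D. sob_derivs t m h D)}"

(* standard Sobolev norm (equivalent to the RKHS norm of the paper) *)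
definition sob_norm :: "real \<Rightarrow> nat \<Rightarrow> (real \<Rightarrow> real) \<Rightarrow> real" where
  "sob_norm t m h = (let D = (SOME D. sob_derivs t m h D) in
      sqrt (\<Sum>k\<le>m. LINT u:{0..t}|lborel. (D k u)\<^sup>2))"

definition dual_norm :: "real \<Rightarrow> nat \<Rightarrow> ((real \<Rightarrow> real) \<Rightarrow> real) \<Rightarrow> ereal" where
  "dual_norm t m L = (SUP h \<in> {h \<in> sobolev t m. sob_norm t m h \<le> 1}. ereal \<bar>L h\<bar>)"

definition in_dual :: "real \<Rightarrow> nat \<Rightarrow> ((real \<Rightarrow> real) \<Rightarrow> real) \<Rightarrow> bool" where
  "in_dual t m L \<longleftrightarrow>
     (\<forall>h\<in>sobolev t m. \<forall>g\<in>sobolev t m. \<forall>a b. L (\<lambda>u. a * h u + b * g u) = a * L h + b * L g) \<and>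
     dual_norm t m L < \<infinity>"

definition cadlag_on :: "real \<Rightarrow> (real \<Rightarrow> real) \<Rightarrow> bool" where
  "cadlag_on t Z \<longleftrightarrow>
     (\<forall>s\<in>{0..<t}. continuous (at_right s) Z) \<and>
     (\<forall>s\<in>{0<..t}. \<exists>l. (Z \<longlongrightarrow> l) (at_left s))"

definition left_lim :: "(real \<Rightarrow> real) \<Rightarrow> real \<Rightarrow> real" where
  "left_lim Z s = (if s \<le> 0 then Z 0 else Lim (at_left s) Z)"

definition wderiv :: "real \<Rightarrow> (real \<Rightarrow> real) \<Rightarrow> real \<Rightarrow> real" where
  "wderiv t h = (SOME g. weak_deriv t h g)"

definition pw_int :: "real \<Rightarrow> (real \<Rightarrow> real) \<Rightarrow> real \<Rightarrow> (real \<Rightarrow> real) \<Rightarrow> real" where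
  "pw_int t Z s h = h s * Z s - h 0 * Z 0 - (LINT u:{0..s}|lborel. left_lim Z u * wderiv t h u)"

definition pw_int_left :: "real \<Rightarrow> (real \<Rightarrow> real) \<Rightarrow> real \<Rightarrow> (real \<Rightarrow> real) \<Rightarrow> real" where
  "pw_int_left t Z s h = h s * left_lim Z s - h 0 * Z 0 - (LINT u:{0..s}|lborel. left_lim Z u * wderiv t h u)"

end

theory Submission
  imports Defs
begin


definition ksmooth :: "nat \<Rightarrow> (real \<Rightarrow> real) \<Rightarrow> bool" where
  "ksmooth n f \<longleftrightarrow> (\<forall>j<n. \<forall>x. ((deriv ^^ j) f) differentiable (at x))"

definition smooth :: "(real \<Rightarrow> real) \<Rightarrow> bool" where
  "smooth f \<longleftrightarrow> (\<forall>k x. ((deriv ^^ k) f) differentiable (at x))"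

lemma deriv_eqI: "(\<And>x. (f has_real_derivative f' x) (at x)) \<Longrightarrow> deriv f = f'"
  by (rule ext) (simp add: DERIV_imp_deriv)

lemma ksmooth_0[simp]: "ksmooth 0 f" by (simp add: ksmooth_def)

lemma funpow_deriv_Suc: "(deriv ^^ Suc j) f = (deriv ^^ j) (deriv f)"
  by (simp add: funpow_Suc_right del: funpow.simps)

lemma ksmooth_Suc: "ksmooth (Suc n) f \<longleftrightarrow> (\<forall>x. f differentiable (at x)) \<and> ksmooth n (deriv f)"
proof
  assume a: "ksmooth (Suc n) f"
  show "(\<forall>x. f differentiable (at x)) \<and> ksmooth n (deriv f)"
  proof
    show "\<forall>x. f differentiable (at x)" using a[unfolded ksmooth_def, rule_format, of 0] by simp
    show "ksmooth n (deriv f)" unfolding ksmooth_def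
    proof (intro allI impI)
      fix j x assume "j < n"
      then show "(deriv ^^ j) (deriv f) differentiable (at x)"
        using a[unfolded ksmooth_def, rule_format, of "Suc j" x] by (simp add: funpow_deriv_Suc del: funpow.simps)
    qed
  qed
next
  assume a: "(\<forall>x. f differentiable (at x)) \<and> ksmooth n (deriv f)"
  show "ksmooth (Suc n) f" unfolding ksmooth_def
  proof (intro allI impI)
    fix j x assume "j < Suc n"
    then show "(deriv ^^ j) f differentiable (at x)"
      using a unfolding ksmooth_def by (cases j) (auto simp: funpow_deriv_Suc simp del: funpow.simps)
  qed
qed

lemma smooth_ksmooth: "smooth f \<longleftrightarrow> (\<forall>n. ksmooth n f)"
  unfolding smooth_def ksmooth_def by (meson lessI)

lemma smooth_iff: "smooth f \<longleftrightarrow> (\<forall>x. f differentiable (at x)) \<and> smooth (deriv f)"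
  unfolding smooth_ksmooth
proof
  assume "\<forall>n. ksmooth n f" then show "(\<forall>x. f differentiable (at x)) \<and> (\<forall>n. ksmooth n (deriv f))"
    using ksmooth_Suc by blast
next
  assume a: "(\<forall>x. f differentiable (at x)) \<and> (\<forall>n. ksmooth n (deriv f))"
  show "\<forall>n. ksmooth n f"
  proof
    fix n show "ksmooth n f" using a by (cases n) (auto simp: ksmooth_Suc)
  qed
qed

lemma deriv_add_fun: fixes f g :: "real \<Rightarrow> real" assumes "\<forall>x. f differentiable (at x)" "\<forall>x. g differentiable (at x)" shows "deriv (\<lambda>x. f x + g x) = (\<lambda>x. deriv f x + deriv g x)"
proof (rule deriv_eqI)
  fix x
  have "(f has_real_derivative deriv f x) (at x)" "(g has_real_derivative deriv g x) (at x)"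
    using assms DERIV_deriv_iff_real_differentiable by blast+
  then show "((\<lambda>x. f x + g x) has_real_derivative deriv f x + deriv g x) (at x)" by (rule DERIV_add)
qed

lemma deriv_mult_fun: fixes f g :: "real \<Rightarrow> real" assumes "\<forall>x. f differentiable (at x)" "\<forall>x. g differentiable (at x)" shows "deriv (\<lambda>x. f x * g x) = (\<lambda>x. deriv f x * g x + f x * deriv g x)"
proof (rule deriv_eqI)
  fix x
  have "(f has_real_derivative deriv f x) (at x)" "(g has_real_derivative deriv g x) (at x)"
    using assms DERIV_deriv_iff_real_differentiable by blast+
  from DERIV_mult[OF this] show "((\<lambda>x. f x * g x) has_real_derivative deriv f x * g x + f x * deriv g x) (at x)"
    by (simp add: mult.commute)
qed

lemma deriv_cmult_fun: fixes f :: "real \<Rightarrow> real" assumes "\<forall>x. f differentiable (at x)" shows "deriv (\<lambda>x. c * f x) = (\<lambda>x. c * deriv f x)"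
proof (rule deriv_eqI)
  fix x
  have "(f has_real_derivative deriv f x) (at x)"
    using assms DERIV_deriv_iff_real_differentiable by blast
  from DERIV_cmult[OF this] show "((\<lambda>x. c * f x) has_real_derivative c * deriv f x) (at x)" .
qed

lemma deriv_affine_fun: fixes f :: "real \<Rightarrow> real" assumes "\<forall>x. f differentiable (at x)" shows "deriv (\<lambda>x. f (a * x + b)) = (\<lambda>x. a * deriv f (a * x + b))"
proof (rule deriv_eqI)
  fix x
  have d: "(f has_real_derivative deriv f (a*x+b)) (at (a*x+b))"
    using assms by (simp add: DERIV_deriv_iff_real_differentiable)
  have "((\<lambda>x. a * x + b) has_real_derivative a) (at x)" by (auto intro!: derivative_eq_intros)
  from DERIV_chain2[OF d this] show "((\<lambda>x. f (a * x + b)) has_real_derivative a * deriv f (a * x + b)) (at x)"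
    by (simp add: mult.commute)
qed

lemma ksmooth_add: fixes f g :: "real \<Rightarrow> real" shows "ksmooth n f \<Longrightarrow> ksmooth n g \<Longrightarrow> ksmooth n (\<lambda>x. f x + g x)"
proof (induction n arbitrary: f g)
  case (Suc n)
  have df: "\<forall>x. f differentiable (at x)" "ksmooth n (deriv f)" using Suc.prems ksmooth_Suc by blast+
  have dg: "\<forall>x. g differentiable (at x)" "ksmooth n (deriv g)" using Suc.prems ksmooth_Suc by blast+
  have e: "deriv (\<lambda>x. f x + g x) = (\<lambda>x. deriv f x + deriv g x)" using df dg deriv_add_fun by blast
  have "ksmooth n (\<lambda>x. deriv f x + deriv g x)" using Suc.IH df dg by blast
  moreover have "\<forall>x. (\<lambda>x. f x + g x) differentiable (at x)" using df dg by simp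
  ultimately show ?case unfolding ksmooth_Suc e by blast
qed simp

lemma ksmooth_cmult: fixes f :: "real \<Rightarrow> real" shows "ksmooth n f \<Longrightarrow> ksmooth n (\<lambda>x. c * f x)"
proof (induction n arbitrary: f)
  case (Suc n)
  have df: "\<forall>x. f differentiable (at x)" "ksmooth n (deriv f)" using Suc.prems ksmooth_Suc by blast+
  have e: "deriv (\<lambda>x. c * f x) = (\<lambda>x. c * deriv f x)" using df deriv_cmult_fun by blast
  have "ksmooth n (\<lambda>x. c * deriv f x)" using Suc.IH df by blast
  moreover have "\<forall>x. (\<lambda>x. c * f x) differentiable (at x)" using df by simp
  ultimately show ?case unfolding ksmooth_Suc e by blast
qed simp

lemma ksmooth_affine: fixes f :: "real \<Rightarrow> real" shows "ksmooth n f \<Longrightarrow> ksmooth n (\<lambda>x. f (a * x + b))"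
proof (induction n arbitrary: f)
  case (Suc n)
  have df: "\<forall>x. f differentiable (at x)" "ksmooth n (deriv f)" using Suc.prems ksmooth_Suc by blast+
  have e: "deriv (\<lambda>x. f (a * x + b)) = (\<lambda>x. a * deriv f (a * x + b))" using df deriv_affine_fun by blast
  have "ksmooth n (\<lambda>x. deriv f (a * x + b))" using Suc.IH df by blast
  then have "ksmooth n (\<lambda>x. a * deriv f (a * x + b))" by (rule ksmooth_cmult)
  moreover have "\<forall>x. (\<lambda>x. f (a * x + b)) differentiable (at x)"
  proof
    fix x
    have "(\<lambda>x. a * x + b) differentiable (at x)" by (simp add: differentiable_add)
    then show "(\<lambda>x. f (a * x + b)) differentiable (at x)" using df differentiable_compose[of f] by blast
  qed
  ultimately show ?case unfolding ksmooth_Suc e by blast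
qed simp

lemma ksmooth_mult: fixes f g :: "real \<Rightarrow> real" shows "smooth f \<Longrightarrow> smooth g \<Longrightarrow> ksmooth n (\<lambda>x. f x * g x)"
proof (induction n arbitrary: f g)
  case (Suc n)
  have df: "\<forall>x. f differentiable (at x)" "smooth (deriv f)" using Suc.prems smooth_iff by blast+
  have dg: "\<forall>x. g differentiable (at x)" "smooth (deriv g)" using Suc.prems smooth_iff by blast+
  have e: "deriv (\<lambda>x. f x * g x) = (\<lambda>x. deriv f x * g x + f x * deriv g x)" using df dg deriv_mult_fun by blast
  have "ksmooth n (\<lambda>x. deriv f x * g x)" using Suc.IH df Suc.prems by blast
  moreover have "ksmooth n (\<lambda>x. f x * deriv g x)" using Suc.IH dg Suc.prems by blast
  ultimately have "ksmooth n (\<lambda>x. deriv f x * g x + f x * deriv g x)" by (rule ksmooth_add)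
  moreover have "\<forall>x. (\<lambda>x. f x * g x) differentiable (at x)" using df dg by simp
  ultimately show ?case unfolding ksmooth_Suc e by blast
qed simp

lemma smooth_mult: fixes f g :: "real \<Rightarrow> real" shows "smooth f \<Longrightarrow> smooth g \<Longrightarrow> smooth (\<lambda>x. f x * g x)"
  using ksmooth_mult smooth_ksmooth by blast
lemma smooth_add: fixes f g :: "real \<Rightarrow> real" shows "smooth f \<Longrightarrow> smooth g \<Longrightarrow> smooth (\<lambda>x. f x + g x)"
  using ksmooth_add smooth_ksmooth by blast
lemma smooth_cmult: fixes f :: "real \<Rightarrow> real" shows "smooth f \<Longrightarrow> smooth (\<lambda>x. c * f x)"
  using ksmooth_cmult smooth_ksmooth by blast
lemma smooth_affine: fixes f :: "real \<Rightarrow> real" shows "smooth f \<Longrightarrow> smooth (\<lambda>x. f (a * x + b))"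
  using ksmooth_affine smooth_ksmooth by blast
lemma smooth_diff: fixes f g :: "real \<Rightarrow> real" shows "smooth f \<Longrightarrow> smooth g \<Longrightarrow> smooth (\<lambda>x. f x - g x)"
  using smooth_add[of f "\<lambda>x. (-1) * g x"] smooth_cmult[of g "-1"] by simp

lemma smooth_antideriv: fixes f g :: "real \<Rightarrow> real" shows "smooth g \<Longrightarrow> (\<And>x. (f has_real_derivative g x) (at x)) \<Longrightarrow> smooth f"
proof -
  assume g: "smooth g" and d: "\<And>x. (f has_real_derivative g x) (at x)"
  have "deriv f = g" using d by (rule deriv_eqI)
  moreover have "\<forall>x. f differentiable (at x)" using d real_differentiable_def by blast
  ultimately show ?thesis using g smooth_iff by metis
qed


definition mono_e :: "nat \<Rightarrow> real \<Rightarrow> real" where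
  "mono_e i x = (if x > 0 then (inverse x)^i * exp (- inverse x) else 0)"

inductive G :: "(real \<Rightarrow> real) \<Rightarrow> bool" where
  G_mono: "G (mono_e i)"
| G_add: "G f \<Longrightarrow> G g \<Longrightarrow> G (\<lambda>x. f x + g x)"
| G_cmult: "G f \<Longrightarrow> G (\<lambda>x. c * f x)"

lemma mono_e_lim: "((\<lambda>x. (inverse x)^i * exp (- inverse x)) \<longlongrightarrow> 0) (at_right (0::real))"
proof -
  have "((\<lambda>x. x ^ i / exp x) \<longlongrightarrow> (0::real)) at_top" by (rule tendsto_power_div_exp_0)
  then have "((\<lambda>x. (inverse x) ^ i / exp (inverse x)) \<longlongrightarrow> (0::real)) (at_right 0)"
    using filterlim_at_top_to_right[where f = "\<lambda>x. x ^ i / exp x" and F = "nhds 0"] by simp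
  then show ?thesis by (simp add: exp_minus divide_inverse)
qed

lemma mono_e_deriv: "(mono_e i has_real_derivative (- real i * mono_e (Suc i) x + mono_e (Suc (Suc i)) x)) (at x)"
proof (cases "x > 0")
  case True
  have ev: "eventually (\<lambda>y. mono_e i y = (inverse y)^i * exp (- inverse y)) (nhds x)"
    using eventually_nhds_in_open[of "{0<..}" x] True by (auto elim!: eventually_mono simp: mono_e_def)
  have d: "((\<lambda>y. (inverse y)^i * exp (- inverse y)) has_real_derivative
           (real i * (inverse x)^(i - 1) * (- inverse (x^2))) * exp (- inverse x) + (inverse x)^i * (exp (- inverse x) * inverse (x^2))) (at x)"
    using True by (auto intro!: derivative_eq_intros simp: power2_eq_square)
  have eq: "(real i * (inverse x)^(i - 1) * (- inverse (x^2))) * exp (- inverse x) + (inverse x)^i * (exp (- inverse x) * inverse (x^2))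
      = - real i * mono_e (Suc i) x + mono_e (Suc (Suc i)) x"
  proof (cases i)
    case 0 then show ?thesis using True by (simp add: mono_e_def power2_eq_square field_simps)
  next
    case (Suc j) then show ?thesis using True
      by (simp add: mono_e_def power2_eq_square field_simps)
  qed
  show ?thesis using d eq DERIV_cong_ev[OF refl ev refl] by simp
next
  case False
  show ?thesis
  proof (cases "x < 0")
    case True
    have ev: "eventually (\<lambda>y. mono_e i y = 0) (nhds x)"
      using eventually_nhds_in_open[of "{..<0}" x] True by (auto elim!: eventually_mono simp: mono_e_def)
    have "((\<lambda>y. 0) has_real_derivative 0) (at x)" by simp
    then have "(mono_e i has_real_derivative 0) (at x)" using DERIV_cong_ev[OF refl ev refl] by blast
    moreover have "- real i * mono_e (Suc i) x + mono_e (Suc (Suc i)) x = 0" using True by (simp add: mono_e_def)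
    ultimately show ?thesis by simp
  next
    case False
    with \<open>\<not> x > 0\<close> have x0: "x = 0" by simp
    have "((\<lambda>y. (mono_e i y - mono_e i 0) / (y - 0)) \<longlongrightarrow> 0) (at 0)"
      unfolding filterlim_at_split
    proof
      have "eventually (\<lambda>y. (mono_e i y - mono_e i 0) / (y - 0) = 0) (at_left 0)"
      proof -
        have "eventually (\<lambda>y::real. y < 0) (at_left 0)" by (simp add: eventually_at_filter)
        then show ?thesis by eventually_elim (simp add: mono_e_def)
      qed
      then show "((\<lambda>y. (mono_e i y - mono_e i 0) / (y - 0)) \<longlongrightarrow> 0) (at_left 0)"
        by (rule tendsto_eventually)
    next
      have "eventually (\<lambda>y. (inverse y)^(Suc i) * exp (- inverse y) = (mono_e i y - mono_e i 0) / (y - 0)) (at_right 0)"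
      proof -
        have "eventually (\<lambda>y::real. y > 0) (at_right 0)" by (simp add: eventually_at_filter)
        then show ?thesis by eventually_elim (simp add: mono_e_def divide_inverse mult_ac)
      qed
      with mono_e_lim[of "Suc i"] show "((\<lambda>y. (mono_e i y - mono_e i 0) / (y - 0)) \<longlongrightarrow> 0) (at_right 0)"
        by (rule Lim_transform_eventually)
    qed
    then show ?thesis using x0 by (simp add: has_field_derivative_iff mono_e_def)
  qed
qed

lemma G_deriv: "G f \<Longrightarrow> \<exists>f'. G f' \<and> (\<forall>x. (f has_real_derivative f' x) (at x))"
proof (induction rule: G.induct)
  case (G_mono i)
  have "G (\<lambda>x. - real i * mono_e (Suc i) x + mono_e (Suc (Suc i)) x)"
    by (rule G_add, rule G_cmult, rule G_mono, rule G_mono)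
  then show ?case using mono_e_deriv by blast
next
  case (G_add f g)
  then obtain f' g' where "G f'" "G g'" "\<forall>x. (f has_real_derivative f' x) (at x)" "\<forall>x. (g has_real_derivative g' x) (at x)"
    by blast
  then show ?case by (intro exI[of _ "\<lambda>x. f' x + g' x"]) (auto intro!: G.intros DERIV_add)
next
  case (G_cmult f c)
  then obtain f' where "G f'" "\<forall>x. (f has_real_derivative f' x) (at x)" by blast
  then show ?case by (intro exI[of _ "\<lambda>x. c * f' x"]) (auto intro!: G.intros DERIV_cmult)
qed

lemma G_ksmooth: "\<forall>f. G f \<longrightarrow> ksmooth n f"
proof (induction n)
  case (Suc n)
  show ?case
  proof (intro allI impI)
    fix f assume "G f"
    then obtain f' where f': "G f'" "\<forall>x. (f has_real_derivative f' x) (at x)" using G_deriv by blast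
    then have "deriv f = f'" by (intro deriv_eqI) auto
    then show "ksmooth (Suc n) f" using f' Suc real_differentiable_def unfolding ksmooth_Suc by metis
  qed
qed simp

lemma G_smooth: "G f \<Longrightarrow> smooth f"
  using G_ksmooth smooth_ksmooth by blast

definition Eb :: "real \<Rightarrow> real" where "Eb x = mono_e 0 x * mono_e 0 (1 - x)"

lemma Eb_smooth: "smooth Eb"
proof -
  have "smooth (mono_e 0)" by (rule G_smooth) (rule G_mono)
  then have "smooth (\<lambda>x. mono_e 0 ((-1) * x + 1))" by (rule smooth_affine)
  with \<open>smooth (mono_e 0)\<close> show ?thesis unfolding Eb_def using smooth_mult by simp
qed

lemma Eb_nonneg: "Eb x \<ge> 0" by (simp add: Eb_def mono_e_def)
lemma Eb_pos: "0 < x \<Longrightarrow> x < 1 \<Longrightarrow> Eb x > 0" by (simp add: Eb_def mono_e_def)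
lemma Eb_zero: "x \<le> 0 \<or> 1 \<le> x \<Longrightarrow> Eb x = 0" by (auto simp: Eb_def mono_e_def)

lemma Eb_DERIV: "(Eb has_real_derivative deriv Eb x) (at x)"
  using Eb_smooth smooth_iff DERIV_deriv_iff_real_differentiable by blast
lemma Eb_cont: "continuous_on A Eb"
  using Eb_DERIV by (meson DERIV_isCont continuous_at_imp_continuous_on)


definition Sb :: "real \<Rightarrow> real" where "Sb u = integral {0..u} Eb"

lemma Eb_integrable: "Eb integrable_on {a..b}"
  by (rule integrable_continuous_interval) (rule Eb_cont)

lemma Sb_eq_L: assumes "L \<le> 0" "L \<le> u" shows "Sb u = integral {L..u} Eb"
proof (cases "u < 0")
  case True
  have "integral {L..u} Eb = integral {L..u} (\<lambda>x. 0)"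
    by (rule integral_cong) (use True in \<open>auto intro: Eb_zero\<close>)
  then show ?thesis using True by (simp add: Sb_def)
next
  case False
  have "integral {L..0} Eb = integral {L..0} (\<lambda>x. 0)"
    by (rule integral_cong) (auto intro: Eb_zero)
  then have z: "integral {L..0} Eb = 0" by simp
  have "integral {L..0} Eb + integral {0..u} Eb = integral {L..u} Eb"
    by (rule Henstock_Kurzweil_Integration.integral_combine) (use False assms in \<open>auto intro: Eb_integrable\<close>)
  then show ?thesis using z by (simp add: Sb_def)
qed

lemma Sb_deriv: "(Sb has_real_derivative Eb x) (at x)"
proof -
  define L where "L = min 0 x - 1"
  have "((\<lambda>u. integral {L..u} Eb) has_real_derivative Eb x) (at x within {L..x+1})"
    by (rule integral_has_real_derivative) (auto simp: L_def intro: Eb_cont)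
  moreover have "x \<in> interior {L..x+1}" by (simp add: L_def)
  ultimately have "((\<lambda>u. integral {L..u} Eb) has_real_derivative Eb x) (at x)"
    using at_within_interior by metis
  then show ?thesis
    by (rule has_field_derivative_transform_within_open[where S = "{L<..}"])
       (auto simp: L_def intro!: Sb_eq_L[symmetric])
qed

lemma Sb_cont: "continuous_on A Sb"
  using Sb_deriv by (meson DERIV_isCont continuous_at_imp_continuous_on)

lemma Sb_left: "u \<le> 0 \<Longrightarrow> Sb u = 0"
  by (cases "u < 0") (auto simp: Sb_def)

lemma Sb_right: assumes "1 \<le> u" shows "Sb u = Sb 1"
proof -
  have "integral {1..u} Eb = integral {1..u} (\<lambda>x. 0)"
    by (rule integral_cong) (auto intro: Eb_zero)
  then have z: "integral {1..u} Eb = 0" by simp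
  have "integral {0..1} Eb + integral {1..u} Eb = integral {0..u} Eb"
    by (rule Henstock_Kurzweil_Integration.integral_combine) (use assms in \<open>auto intro: Eb_integrable\<close>)
  then show ?thesis using z by (simp add: Sb_def)
qed

lemma Sb_mono: assumes "u \<le> v" shows "Sb u \<le> Sb v"
proof (rule DERIV_nonneg_imp_increasing_open[OF assms])
  fix x show "\<exists>y. DERIV Sb x :> y \<and> y \<ge> 0" using Sb_deriv Eb_nonneg by blast
qed (rule Sb_cont)

definition I0 :: real where "I0 = Sb 1"

lemma I0_pos: "I0 > 0"
proof -
  have dd: "Sb differentiable (at x)" for x using Sb_deriv real_differentiable_def by blast
  have "\<exists>l z. 1/4 < z \<and> z < 3/4 \<and> DERIV Sb z :> l \<and> Sb (3/4) - Sb (1/4) = (3/4 - 1/4) * l"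
    by (rule MVT) (auto intro: Sb_cont dd)
  then obtain l z where z: "1/4 < z" "z < 3/4" "DERIV Sb z :> l" "Sb (3/4) - Sb (1/4) = (3/4 - 1/4) * l"
    by blast
  have "l = Eb z" using z(3) Sb_deriv DERIV_unique by blast
  then have "l > 0" using z Eb_pos by simp
  then have "Sb (1/4) < Sb (3/4)" using z(4) by simp
  moreover have "Sb 0 \<le> Sb (1/4)" "Sb (3/4) \<le> Sb 1" by (auto intro: Sb_mono)
  ultimately show ?thesis by (simp add: I0_def Sb_left)
qed

definition S :: "real \<Rightarrow> real" where "S x = Sb x / I0"

lemma S_deriv: "(S has_real_derivative (Eb x / I0)) (at x)"
  unfolding S_def by (intro DERIV_cdivide Sb_deriv)

lemma S_smooth: "smooth S"
proof (rule smooth_antideriv[OF _ S_deriv])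
  have "smooth (\<lambda>x. inverse I0 * Eb x)" by (rule smooth_cmult) (rule Eb_smooth)
  then show "smooth (\<lambda>x. Eb x / I0)" by (simp add: divide_inverse mult.commute)
qed

lemma S_left: "u \<le> 0 \<Longrightarrow> S u = 0" by (simp add: S_def Sb_left)
lemma S_right: assumes "1 \<le> u" shows "S u = 1"
proof -
  have "Sb u = I0" using Sb_right[OF assms] by (simp add: I0_def)
  then show ?thesis using I0_pos by (simp add: S_def)
qed
lemma S_mono: "u \<le> v \<Longrightarrow> S u \<le> S v" using I0_pos Sb_mono by (simp add: S_def divide_right_mono)
lemma S_nonneg: "S u \<ge> 0" using S_mono[of "min u 0" u] S_left[of "min u 0"] by simp
lemma S_le1: "S u \<le> 1" using S_mono[of u "max u 1"] S_right[of "max u 1"] by simp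
lemma S_cont: "continuous_on A S"
  using S_deriv by (meson DERIV_isCont continuous_at_imp_continuous_on)

definition phi :: "real \<Rightarrow> real \<Rightarrow> real \<Rightarrow> real \<Rightarrow> real" where
  "phi c d n x = S (n * x + (- n * c)) - S (n * x + (1 - n * d))"

definition dphi :: "real \<Rightarrow> real \<Rightarrow> real \<Rightarrow> real \<Rightarrow> real" where
  "dphi c d n x = n * Eb (n * x + (- n * c)) / I0 - n * Eb (n * x + (1 - n * d)) / I0"

lemma phi_deriv: "(phi c d n has_real_derivative dphi c d n x) (at x)"
proof -
  have a: "((\<lambda>x. n * x + b) has_real_derivative n) (at x)" for b
    by (auto intro!: derivative_eq_intros)
  have "((\<lambda>x. S (n * x + (- n * c))) has_real_derivative Eb (n * x + (- n * c)) / I0 * n) (at x)"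
    by (rule DERIV_chain2[OF S_deriv a])
  moreover have "((\<lambda>x. S (n * x + (1 - n * d))) has_real_derivative Eb (n * x + (1 - n * d)) / I0 * n) (at x)"
    by (rule DERIV_chain2[OF S_deriv a])
  ultimately show ?thesis unfolding phi_def dphi_def
    by (auto intro: DERIV_diff[THEN DERIV_cong] simp: algebra_simps)
qed

lemma deriv_phi: "deriv (phi c d n) = dphi c d n"
  by (rule deriv_eqI) (rule phi_deriv)

lemma phi_smooth: "smooth (phi c d n)"
  unfolding phi_def by (intro smooth_diff smooth_affine S_smooth)

lemma phi_zero: assumes "n > 0" "n * (d - c) \<ge> 1" "x \<notin> {c<..<d}" shows "phi c d n x = 0"
proof (cases "x \<le> c")
  case True
  have "n * x + (- n * c) \<le> 0" using True assms by (simp add: algebra_simps mult_left_mono)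
  moreover have "n * x + (1 - n * d) \<le> 0"
  proof -
    have "n * x \<le> n * c" using True assms by (simp add: mult_left_mono)
    moreover have "n * d - n * c \<ge> 1" using assms(2) by (simp add: right_diff_distrib)
    ultimately show ?thesis by linarith
  qed
  ultimately show ?thesis by (simp add: phi_def S_left)
next
  case False
  then have "x \<ge> d" using assms by auto
  have "n * x + (- n * c) \<ge> 1"
  proof -
    have "n * d \<le> n * x" using \<open>x \<ge> d\<close> assms by (simp add: mult_left_mono)
    moreover have "n * d - n * c \<ge> 1" using assms(2) by (simp add: right_diff_distrib)
    ultimately show ?thesis by linarith
  qed
  moreover have "n * x + (1 - n * d) \<ge> 1"
  proof -
    have "n * d \<le> n * x" using \<open>x \<ge> d\<close> assms by (simp add: mult_left_mono)
    then show ?thesis by simp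
  qed
  ultimately show ?thesis by (simp add: phi_def S_right)
qed

lemma phi_test: assumes "0 < c" "c < d" "d < t" "n > 0" "n * (d - c) \<ge> 1"
  shows "test_fun t (phi c d n)"
  unfolding test_fun_def
proof (intro conjI exI)
  show "\<forall>k x. (deriv ^^ k) (phi c d n) differentiable (at x)" using phi_smooth[unfolded smooth_def] .
  show "\<forall>x. x \<notin> {c..d} \<longrightarrow> phi c d n x = 0" using phi_zero[OF assms(4,5)] by auto
qed (use assms in auto)

lemma phi_bounds: assumes "n > 0" "n * (d - c) \<ge> 1" shows "0 \<le> phi c d n x" "phi c d n x \<le> 1"
proof -
  have "n * x + (1 - n * d) \<le> n * x + (- n * c)" using assms by (simp add: algebra_simps)
  then have "S (n * x + (1 - n * d)) \<le> S (n * x + (- n * c))" by (rule S_mono)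
  then show "0 \<le> phi c d n x" by (simp add: phi_def)
  show "phi c d n x \<le> 1" using S_nonneg[of "n * x + (1 - n * d)"] S_le1[of "n * x + (- n * c)"]
    by (simp add: phi_def)
qed

lemma phi_lim: assumes "c < d"
  shows "(\<lambda>k. phi c d (real k) x) \<longlonglongrightarrow> indicator {c<..<d} x"
proof -
  have ev: "eventually (\<lambda>k. phi c d (real k) x = indicator {c<..<d} x) sequentially"
  proof (cases "x \<in> {c<..<d}")
    case True
    obtain N :: nat where N: "N > 1 / (x - c)" "N > 1 / (d - x)"
      using reals_Archimedean2[of "max (1 / (x - c)) (1 / (d - x))"] by auto
    have "phi c d (real k) x = 1" if "k \<ge> N" for k
    proof -
      have k1: "real k > 1 / (x - c)" "real k > 1 / (d - x)" using N that by linarith+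
      have "real k * (x - c) > 1" using k1(1) True by (simp add: field_simps)
      then have "real k * x + (- real k * c) \<ge> 1" by (simp add: algebra_simps)
      moreover have "real k * (d - x) > 1" using k1(2) True by (simp add: field_simps)
      then have "real k * x + (1 - real k * d) \<le> 0" by (simp add: algebra_simps)
      ultimately show ?thesis by (simp add: phi_def S_left S_right)
    qed
    then show ?thesis using True unfolding eventually_sequentially by auto
  next
    case False
    obtain N :: nat where N: "N > 1 / (d - c)"
      using reals_Archimedean2 by auto
    have "phi c d (real k) x = 0" if "k \<ge> N" for k
    proof (rule phi_zero)
      have "real k > 1 / (d - c)" using N that by linarith
      then show "real k * (d - c) \<ge> 1" using assms by (simp add: field_simps)
      have "1 / (d - c) > 0" using assms by simp
      then show "real k > 0" using \<open>real k > 1 / (d - c)\<close> by linarith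
      show "x \<notin> {c<..<d}" using False .
    qed
    then show ?thesis using False unfolding eventually_sequentially by auto
  qed
  then show ?thesis by (rule tendsto_eventually)
qed


definition K :: "real \<Rightarrow> real \<Rightarrow> real \<Rightarrow> real" where
  "K n a x = n * Eb (n * x + (- n * a)) / I0"

lemma K_cont: "continuous_on A (K n a)"
proof -
  have "continuous_on A (\<lambda>x. n * x + (- n * a))" by (intro continuous_intros)
  then have "continuous_on A (\<lambda>x. Eb (n * x + (- n * a)))"
    using continuous_on_compose2[OF Eb_cont[of UNIV]] by auto
  then show ?thesis unfolding K_def using I0_pos by (intro continuous_intros) auto
qed

lemma K_nonneg: "n \<ge> 0 \<Longrightarrow> K n a x \<ge> 0"
  using I0_pos Eb_nonneg by (simp add: K_def)

lemma K_zero: assumes "n > 0" "x \<notin> {a..a + 1/n}" shows "K n a x = 0"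
proof -
  have "n * x + (- n * a) \<le> 0 \<or> 1 \<le> n * x + (- n * a)"
  proof (cases "x < a")
    case True then have "n * x \<le> n * a" using assms by (simp add: mult_left_mono)
    then show ?thesis by simp
  next
    case False then have "x > a + 1/n" using assms by auto
    then have "n * x > n * (a + 1/n)" using assms by (simp add: mult_strict_left_mono)
    then have "n * x > n * a + 1" using assms by (simp add: distrib_left)
    then show ?thesis by simp
  qed
  then show ?thesis by (simp add: K_def Eb_zero)
qed

lemma K_deriv: "((\<lambda>x. S (n * x + (- n * a))) has_real_derivative K n a x) (at x)"
proof -
  have a: "((\<lambda>x. n * x + (- n * a)) has_real_derivative n) (at x)"
    by (auto intro!: derivative_eq_intros)
  show ?thesis using DERIV_chain2[OF S_deriv a] by (simp add: K_def mult.commute)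
qed

lemma K_int1: assumes "0 < n" "0 \<le> a" "a + 1/n \<le> t"
  shows "(LINT x:{0..t}|lborel. K n a x) = 1"
proof -
  have t0: "0 \<le> t" using assms by (smt (verit) divide_pos_pos)
  have "(LBINT x=ereal 0..ereal t. K n a x) = S (n * t + (- n * a)) - S (n * 0 + (- n * a))"
  proof (rule interval_integral_FTC_finite)
    show "continuous_on {min 0 t..max 0 t} (K n a)" by (rule K_cont)
    fix x
    show "((\<lambda>x. S (n * x + (- n * a))) has_vector_derivative K n a x) (at x within {min 0 t..max 0 t})"
      using K_deriv[of n a x] by (simp add: has_real_derivative_iff_has_vector_derivative has_vector_derivative_at_within)
  qed
  moreover have "S (n * t + (- n * a)) = 1"
  proof (rule S_right)
    have "n * (a + 1/n) \<le> n * t" using assms by (simp add: mult_left_mono)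
    then show "1 \<le> n * t + - n * a" using assms by (simp add: distrib_left)
  qed
  moreover have "S (n * 0 + (- n * a)) = 0" using assms by (intro S_left) simp
  ultimately have "(LBINT x=ereal 0..ereal t. K n a x) = 1" by simp
  then show ?thesis using interval_integral_Icc[OF t0, of "K n a"] by simp
qed

lemma cont_set_integrable: "continuous_on {a..b} f \<Longrightarrow> set_integrable lborel {a..b} (f :: real \<Rightarrow> real)"
  by (rule borel_integrable_atLeastAtMost')

lemma approx_id:
  assumes hc: "continuous_on {0..t} h" and n: "n > 0" and a: "0 \<le> a" "a + 1/n \<le> t"
    and e: "\<forall>x\<in>{a..a+1/n}. \<bar>h x - h p\<bar> \<le> e"
  shows "\<bar>(LINT x:{0..t}|lborel. h x * K n a x) - h p\<bar> \<le> e"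
proof -
  have Kc: "continuous_on {0..t} (K n a)" by (rule K_cont)
  have iK: "set_integrable lborel {0..t} (K n a)" using Kc by (rule cont_set_integrable)
  have ihK: "set_integrable lborel {0..t} (\<lambda>x. h x * K n a x)"
    by (rule cont_set_integrable) (intro continuous_intros hc Kc)
  have ipK: "set_integrable lborel {0..t} (\<lambda>x. h p * K n a x)" using iK by simp
  have ieK: "set_integrable lborel {0..t} (\<lambda>x. e * K n a x)" using iK by simp
  have iD: "set_integrable lborel {0..t} (\<lambda>x. h x * K n a x - h p * K n a x)"
    using ihK ipK by (rule set_integral_diff)
  have I1: "(LINT x:{0..t}|lborel. K n a x) = 1" using K_int1[OF n a] .
  have eq: "(LINT x:{0..t}|lborel. h x * K n a x - h p * K n a x) = (LINT x:{0..t}|lborel. h x * K n a x) - h p"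
    using set_integral_diff(2)[OF ihK ipK] I1 by simp
  have pw: "\<bar>h x * K n a x - h p * K n a x\<bar> \<le> e * K n a x" for x
  proof (cases "x \<in> {a..a+1/n}")
    case True
    then have "\<bar>h x - h p\<bar> * K n a x \<le> e * K n a x"
      using e K_nonneg[of n a x] n by (intro mult_right_mono) auto
    then show ?thesis using K_nonneg[of n a x] n by (simp add: left_diff_distrib[symmetric] abs_mult)
  next
    case False then show ?thesis using K_zero[OF n False] by simp
  qed
  have up: "(LINT x:{0..t}|lborel. h x * K n a x - h p * K n a x) \<le> (LINT x:{0..t}|lborel. e * K n a x)"
    using iD ieK pw by (intro set_integral_mono) (auto simp: abs_le_iff)
  have "(\<lambda>x. - (e * K n a x)) = (\<lambda>x. (- e) * K n a x)" by simp
  moreover have "set_integrable lborel {0..t} (\<lambda>x. (- e) * K n a x)" using iK by (rule set_integrable_mult_right)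
  ultimately have ineK: "set_integrable lborel {0..t} (\<lambda>x. - (e * K n a x))" by metis
  have lo: "(LINT x:{0..t}|lborel. - (e * K n a x)) \<le> (LINT x:{0..t}|lborel. h x * K n a x - h p * K n a x)"
  proof (rule set_integral_mono[OF ineK iD])
    fix x show "- (e * K n a x) \<le> h x * K n a x - h p * K n a x" using pw[of x] by (simp add: abs_le_iff)
  qed
  have "(LINT x:{0..t}|lborel. - (e * K n a x)) = - e"
    using set_integral_uminus[OF ieK] I1 by simp
  then show ?thesis using up lo eq I1 by (simp add: abs_le_iff)
qed


lemma dphi_K: "n \<noteq> 0 \<Longrightarrow> dphi c d n x = K n c x - K n (d - 1/n) x"
  by (simp add: dphi_def K_def algebra_simps)

lemma phi_cont: "continuous_on A (phi c d n)"
  using phi_deriv by (meson DERIV_isCont continuous_at_imp_continuous_on)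

lemma phi_borel[measurable]: "phi c d n \<in> borel_measurable lborel"
  using borel_measurable_continuous_onI[OF phi_cont] by simp

lemma approx_lim:
  assumes hc: "continuous_on {0..t} h" and p: "p \<in> {0..t}"
    and ak: "\<And>k. n k > 0 \<and> 0 \<le> a k \<and> a k + 1 / n k \<le> t \<and> a k \<le> p \<and> p \<le> a k + 1 / n k"
    and nl: "(\<lambda>k. 1 / n k) \<longlonglongrightarrow> 0"
  shows "(\<lambda>k. LINT x:{0..t}|lborel. h x * K (n k) (a k) x) \<longlonglongrightarrow> h p"
  unfolding tendsto_iff
proof (intro allI impI)
  fix r :: real assume r: "r > 0"
  obtain \<delta> where \<delta>: "\<delta> > 0" "\<And>x. x \<in> {0..t} \<Longrightarrow> dist x p < \<delta> \<Longrightarrow> dist (h x) (h p) < r / 2"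
    using hc p r unfolding continuous_on_iff by (metis half_gt_zero)
  have "eventually (\<lambda>k. dist (1 / n k) 0 < \<delta>) sequentially"
    using nl \<delta>(1) unfolding tendsto_iff by blast
  then show "eventually (\<lambda>k. dist (LINT x:{0..t}|lborel. h x * K (n k) (a k) x) (h p) < r) sequentially"
  proof eventually_elim
    case (elim k)
    have nk: "n k > 0" "0 \<le> a k" "a k + 1 / n k \<le> t" "a k \<le> p" "p \<le> a k + 1 / n k" using ak[of k] by auto
    have "1 / n k < \<delta>" using elim nk by simp
    have e: "\<forall>x\<in>{a k..a k + 1 / n k}. \<bar>h x - h p\<bar> \<le> r / 2"
    proof
      fix x assume x: "x \<in> {a k..a k + 1 / n k}"
      have "x \<in> {0..t}" using x nk by auto
      moreover have "dist x p < \<delta>" using x nk \<open>1 / n k < \<delta>\<close> by (auto simp: dist_real_def)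
      ultimately show "\<bar>h x - h p\<bar> \<le> r / 2" using \<delta>(2)[of x] by (simp add: dist_real_def)
    qed
    have "\<bar>(LINT x:{0..t}|lborel. h x * K (n k) (a k) x) - h p\<bar> \<le> r / 2"
      using nk e by (intro approx_id[OF hc]) auto
    then show ?case using r by (simp add: dist_real_def)
  qed
qed

lemma key_open:
  assumes hc: "continuous_on {0..t} h" and wd: "weak_deriv t h g"
    and c: "0 < c" "c < d" "d < t"
  shows "h d - h c = (LINT u:{0..t}|lborel. g u * indicator {c<..<d} u)"
proof -
  obtain N :: nat where N0: "max (1 / (d - c)) 1 < real N" using reals_Archimedean2 by blast
  have N: "real N > 1 / (d - c)" "N \<ge> 1" using N0 by auto
  define n where "n k = real (k + N)" for k
  have npos: "n k > 0" for k using N by (simp add: n_def)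
  have ndc: "n k * (d - c) \<ge> 1" for k
  proof -
    have "n k \<ge> real N" by (simp add: n_def)
    then have "n k > 1 / (d - c)" using N by linarith
    then show ?thesis using c by (simp add: field_simps)
  qed
  have inv_le: "1 / n k \<le> d - c" for k using ndc[of k] npos[of k] c by (simp add: field_simps)
  have gi: "set_integrable lborel {0..t} g" using wd by (simp add: weak_deriv_def)
  have gm[measurable]: "(\<lambda>x. indicator {0..t} x * g x) \<in> borel_measurable lborel"
    using gi unfolding set_integrable_def by (simp add: borel_measurable_integrable)
  have hi: "set_integrable lborel {0..t} (\<lambda>x. h x * K (n k) a x)" for k a
    by (rule cont_set_integrable) (intro continuous_intros hc K_cont)
  have W: "(LINT x:{0..t}|lborel. h x * K (n k) c x) - (LINT x:{0..t}|lborel. h x * K (n k) (d - 1 / n k) x)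
       = - (LINT u:{0..t}|lborel. g u * phi c d (n k) u)" for k
  proof -
    have tf: "test_fun t (phi c d (n k))" using phi_test[OF c npos ndc] .
    have "(LINT u:{0..t}|lborel. h u * deriv (phi c d (n k)) u) = - (LINT u:{0..t}|lborel. g u * phi c d (n k) u)"
      using wd tf by (simp add: weak_deriv_def)
    moreover have "(\<lambda>u. h u * deriv (phi c d (n k)) u) = (\<lambda>u. h u * K (n k) c u - h u * K (n k) (d - 1 / n k) u)"
      using npos[of k] by (simp add: deriv_phi dphi_K algebra_simps)
    ultimately show ?thesis using set_integral_diff(2)[OF hi hi] by simp
  qed
  have LA: "(\<lambda>k. LINT x:{0..t}|lborel. h x * K (n k) c x) \<longlonglongrightarrow> h c"
  proof (rule approx_lim[OF hc])
    show "c \<in> {0..t}" using c by simp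
    fix k show "n k > 0 \<and> 0 \<le> c \<and> c + 1 / n k \<le> t \<and> c \<le> c \<and> c \<le> c + 1 / n k"
      using npos[of k] inv_le[of k] c by simp
  next
    have "(\<lambda>k. 1 / real k) \<longlonglongrightarrow> 0" by (rule lim_inverse_n')
    then show "(\<lambda>k. 1 / n k) \<longlonglongrightarrow> 0" unfolding n_def by (rule LIMSEQ_ignore_initial_segment)
  qed
  have LB: "(\<lambda>k. LINT x:{0..t}|lborel. h x * K (n k) (d - 1 / n k) x) \<longlonglongrightarrow> h d"
  proof (rule approx_lim[OF hc])
    show "d \<in> {0..t}" using c by simp
    fix k show "n k > 0 \<and> 0 \<le> d - 1 / n k \<and> d - 1 / n k + 1 / n k \<le> t \<and> d - 1 / n k \<le> d \<and> d \<le> d - 1 / n k + 1 / n k"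
      using npos[of k] inv_le[of k] c by simp
  next
    have "(\<lambda>k. 1 / real k) \<longlonglongrightarrow> 0" by (rule lim_inverse_n')
    then show "(\<lambda>k. 1 / n k) \<longlonglongrightarrow> 0" unfolding n_def by (rule LIMSEQ_ignore_initial_segment)
  qed
  have LR: "(\<lambda>k. LINT u:{0..t}|lborel. g u * phi c d (n k) u) \<longlonglongrightarrow> (LINT u:{0..t}|lborel. g u * indicator {c<..<d} u)"
  proof -
    have "(\<lambda>k. integral\<^sup>L lborel (\<lambda>x. indicator {0..t} x * g x * phi c d (n k) x))
       \<longlonglongrightarrow> integral\<^sup>L lborel (\<lambda>x. indicator {0..t} x * g x * indicator {c<..<d} x)"
    proof (rule integral_dominated_convergence[where w = "\<lambda>x. \<bar>indicator {0..t} x * g x\<bar>"])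
      show "(\<lambda>x. indicator {0..t} x * g x * indicator {c<..<d} x) \<in> borel_measurable lborel" by measurable
      fix k show "(\<lambda>x. indicator {0..t} x * g x * phi c d (n k) x) \<in> borel_measurable lborel" by measurable
    next
      show "integrable lborel (\<lambda>x. \<bar>indicator {0..t} x * g x\<bar>)"
        using gi unfolding set_integrable_def by (simp add: integrable_abs)
    next
      show "AE x in lborel. (\<lambda>k. indicator {0..t} x * g x * phi c d (n k) x) \<longlonglongrightarrow> indicator {0..t} x * g x * indicator {c<..<d} x"
      proof (intro AE_I2 tendsto_mult tendsto_const)
        fix x
        have "(\<lambda>k. phi c d (real k) x) \<longlonglongrightarrow> indicator {c<..<d} x" using phi_lim c by blast
        then show "(\<lambda>k. phi c d (n k) x) \<longlonglongrightarrow> indicator {c<..<d} x"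
          unfolding n_def using LIMSEQ_ignore_initial_segment by fastforce
      qed
    next
      fix k show "AE x in lborel. norm (indicator {0..t} x * g x * phi c d (n k) x) \<le> \<bar>indicator {0..t} x * g x\<bar>"
      proof (intro AE_I2)
        fix x
        have "0 \<le> phi c d (n k) x" "phi c d (n k) x \<le> 1" using phi_bounds[OF npos ndc] by auto
        then show "norm (indicator {0..t} x * g x * phi c d (n k) x) \<le> \<bar>indicator {0..t} x * g x\<bar>"
          by (simp add: abs_mult mult_left_le)
      qed
    qed
    then show ?thesis by (simp add: set_lebesgue_integral_def mult_ac)
  qed
  have "(\<lambda>k. (LINT x:{0..t}|lborel. h x * K (n k) c x) - (LINT x:{0..t}|lborel. h x * K (n k) (d - 1 / n k) x))
      \<longlonglongrightarrow> h c - h d" using LA LB by (rule tendsto_diff)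
  moreover have "(\<lambda>k. (LINT x:{0..t}|lborel. h x * K (n k) c x) - (LINT x:{0..t}|lborel. h x * K (n k) (d - 1 / n k) x))
      \<longlonglongrightarrow> - (LINT u:{0..t}|lborel. g u * indicator {c<..<d} u)" unfolding W using LR by (rule tendsto_minus)
  ultimately have "h c - h d = - (LINT u:{0..t}|lborel. g u * indicator {c<..<d} u)" by (rule LIMSEQ_unique)
  then show ?thesis by simp
qed


lemma key:
  assumes hc: "continuous_on {0..t} h" and wd: "weak_deriv t h g"
    and c: "0 \<le> c" "c \<le> d" "d \<le> t"
  shows "h d - h c = (LINT u:{0..t}|lborel. g u * indicator {c<..<d} u)"
proof (cases "c = d")
  case True then show ?thesis by simp
next
  case False
  then have cd: "c < d" using c by simp
  define \<delta> where "\<delta> k = (d - c) * (1 / real (k + 3))" for k :: nat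
  have \<delta>pos: "\<delta> k > 0" for k using cd by (simp add: \<delta>_def)
  have \<delta>le: "2 * \<delta> k < d - c" for k
  proof -
    have "2 * (1 / real (k + 3)) < 1" by (simp add: field_simps)
    then have "(d - c) * (2 * (1 / real (k + 3))) < (d - c) * 1" using cd by (intro mult_strict_left_mono) auto
    then show ?thesis by (simp add: \<delta>_def mult_ac)
  qed
  have \<delta>lim: "\<delta> \<longlonglongrightarrow> 0"
  proof -
    have "(\<lambda>k. 1 / real k) \<longlonglongrightarrow> 0" by (rule lim_inverse_n')
    then have "(\<lambda>k. 1 / real (k + 3)) \<longlonglongrightarrow> 0" by (rule LIMSEQ_ignore_initial_segment)
    then show ?thesis unfolding \<delta>_def by (rule tendsto_mult_right_zero)
  qed
  have gi: "set_integrable lborel {0..t} g" using wd by (simp add: weak_deriv_def)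
  have gm[measurable]: "(\<lambda>x. indicator {0..t} x * g x) \<in> borel_measurable lborel"
    using gi unfolding set_integrable_def by (simp add: borel_measurable_integrable)
  have E: "h (d - \<delta> k) - h (c + \<delta> k) = (LINT u:{0..t}|lborel. g u * indicator {c + \<delta> k<..<d - \<delta> k} u)" for k
    using key_open[OF hc wd, of "c + \<delta> k" "d - \<delta> k"] \<delta>pos[of k] \<delta>le[of k] c by simp
  have Lc: "(\<lambda>k. c + \<delta> k) \<longlonglongrightarrow> c" using tendsto_add[OF tendsto_const \<delta>lim, of c] by simp
  have Ld: "(\<lambda>k. d - \<delta> k) \<longlonglongrightarrow> d" using tendsto_diff[OF tendsto_const \<delta>lim, of d] by simp
  have Hc: "(\<lambda>k. h (c + \<delta> k)) \<longlonglongrightarrow> h c"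
  proof (rule continuous_on_tendsto_compose[OF hc Lc])
    show "c \<in> {0..t}" using c by simp
    show "\<forall>\<^sub>F k in sequentially. c + \<delta> k \<in> {0..t}"
    proof (intro always_eventually allI)
      fix k show "c + \<delta> k \<in> {0..t}" using \<delta>pos[of k] \<delta>le[of k] c by simp
    qed
  qed
  have Hd: "(\<lambda>k. h (d - \<delta> k)) \<longlonglongrightarrow> h d"
  proof (rule continuous_on_tendsto_compose[OF hc Ld])
    show "d \<in> {0..t}" using c by simp
    show "\<forall>\<^sub>F k in sequentially. d - \<delta> k \<in> {0..t}"
    proof (intro always_eventually allI)
      fix k show "d - \<delta> k \<in> {0..t}" using \<delta>pos[of k] \<delta>le[of k] c by simp
    qed
  qed
  have LR: "(\<lambda>k. LINT u:{0..t}|lborel. g u * indicator {c + \<delta> k<..<d - \<delta> k} u)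
      \<longlonglongrightarrow> (LINT u:{0..t}|lborel. g u * indicator {c<..<d} u)"
  proof -
    have "(\<lambda>k. integral\<^sup>L lborel (\<lambda>x. indicator {0..t} x * g x * indicator {c + \<delta> k<..<d - \<delta> k} x))
       \<longlonglongrightarrow> integral\<^sup>L lborel (\<lambda>x. indicator {0..t} x * g x * indicator {c<..<d} x)"
    proof (rule integral_dominated_convergence[where w = "\<lambda>x. \<bar>indicator {0..t} x * g x\<bar>"])
      show "(\<lambda>x. indicator {0..t} x * g x * indicator {c<..<d} x) \<in> borel_measurable lborel" by measurable
      fix k show "(\<lambda>x. indicator {0..t} x * g x * indicator {c + \<delta> k<..<d - \<delta> k} x) \<in> borel_measurable lborel" by measurable
    next
      show "integrable lborel (\<lambda>x. \<bar>indicator {0..t} x * g x\<bar>)"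
        using gi unfolding set_integrable_def by (simp add: integrable_abs)
    next
      show "AE x in lborel. (\<lambda>k. indicator {0..t} x * g x * indicator {c + \<delta> k<..<d - \<delta> k} x) \<longlonglongrightarrow> indicator {0..t} x * g x * indicator {c<..<d} x"
      proof (intro AE_I2 tendsto_mult tendsto_const)
        fix x
        show "(\<lambda>k. indicator {c + \<delta> k<..<d - \<delta> k} x :: real) \<longlonglongrightarrow> indicator {c<..<d} x"
        proof (cases "x \<in> {c<..<d}")
          case True
          have "eventually (\<lambda>k. \<delta> k < min (x - c) (d - x)) sequentially"
            using \<delta>lim True unfolding tendsto_iff by (auto simp: dist_real_def elim!: allE[of _ "min (x - c) (d - x)"] eventually_mono)
          then have "eventually (\<lambda>k. indicator {c + \<delta> k<..<d - \<delta> k} x = (indicator {c<..<d} x :: real)) sequentially"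
            by eventually_elim (use True in auto)
          then show ?thesis by (rule tendsto_eventually)
        next
          case False
          have "indicator {c + \<delta> k<..<d - \<delta> k} x = (indicator {c<..<d} x :: real)" for k
            using False \<delta>pos[of k] by auto
          then show ?thesis by simp
        qed
      qed
    next
      fix k show "AE x in lborel. norm (indicator {0..t} x * g x * indicator {c + \<delta> k<..<d - \<delta> k} x) \<le> \<bar>indicator {0..t} x * g x\<bar>"
        by (intro AE_I2) (simp add: abs_mult indicator_def)
    qed
    then show ?thesis by (simp add: set_lebesgue_integral_def mult_ac)
  qed
  have "(\<lambda>k. h (d - \<delta> k) - h (c + \<delta> k)) \<longlonglongrightarrow> h d - h c" using Hd Hc by (rule tendsto_diff)
  then show ?thesis using LR unfolding E by (rule LIMSEQ_unique)
qed


lemma wd_int_zero: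
  assumes hc: "continuous_on {0..t} h" and wd1: "weak_deriv t h g1" and wd2: "weak_deriv t h g2"
    and a: "a < t" "0 \<le> t"
  shows "integral\<^sup>L lborel (\<lambda>x. indicator {0..t} x * (g1 x - g2 x) * indicator {a<..} x) = 0"
proof -
  define c where "c = max a 0"
  have c: "0 \<le> c" "c \<le> t" using a by (auto simp: c_def)
  have g1i: "integrable lborel (\<lambda>x. indicator {0..t} x * g1 x)"
    using wd1 by (simp add: weak_deriv_def set_integrable_def)
  have g2i: "integrable lborel (\<lambda>x. indicator {0..t} x * g2 x)"
    using wd2 by (simp add: weak_deriv_def set_integrable_def)
  have i1: "integrable lborel (\<lambda>x. indicator {0..t} x * g1 x * indicator {c<..<t} x)"
    using g1i by (intro integrable_real_mult_indicator) simp_all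
  have i2: "integrable lborel (\<lambda>x. indicator {0..t} x * g2 x * indicator {c<..<t} x)"
    using g2i by (intro integrable_real_mult_indicator) simp_all
  have k1: "h t - h c = (LINT u:{0..t}|lborel. g1 u * indicator {c<..<t} u)" using key[OF hc wd1 c order_refl] .
  have k2: "h t - h c = (LINT u:{0..t}|lborel. g2 u * indicator {c<..<t} u)" using key[OF hc wd2 c order_refl] .
  have "integral\<^sup>L lborel (\<lambda>x. indicator {0..t} x * g1 x * indicator {c<..<t} x)
      = integral\<^sup>L lborel (\<lambda>x. indicator {0..t} x * g2 x * indicator {c<..<t} x)"
    using k1 k2 by (simp add: set_lebesgue_integral_def mult_ac)
  then have z: "integral\<^sup>L lborel (\<lambda>x. indicator {0..t} x * (g1 x - g2 x) * indicator {c<..<t} x) = 0"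
    using i1 i2 by (simp add: algebra_simps)
  have f0i: "integrable lborel (\<lambda>x. indicator {0..t} x * (g1 x - g2 x))"
    using Bochner_Integration.integrable_diff[OF g1i g2i] by (simp add: algebra_simps)
  have m1: "(\<lambda>x. indicator {0..t} x * (g1 x - g2 x) * indicator {a<..} x) \<in> borel_measurable lborel"
    using f0i by (intro borel_measurable_integrable integrable_real_mult_indicator) simp_all
  have m2: "(\<lambda>x. indicator {0..t} x * (g1 x - g2 x) * indicator {c<..<t} x) \<in> borel_measurable lborel"
    using f0i by (intro borel_measurable_integrable integrable_real_mult_indicator) simp_all
  have "AE x in lborel. indicator {0..t} x * (g1 x - g2 x) * indicator {a<..} x
        = indicator {0..t} x * (g1 x - g2 x) * indicator {c<..<t} x"
    using AE_lborel_singleton[of 0] AE_lborel_singleton[of t]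
  proof eventually_elim
    case (elim x)
    then show ?case using a by (auto simp: indicator_def c_def)
  qed
  with m1 m2 have "integral\<^sup>L lborel (\<lambda>x. indicator {0..t} x * (g1 x - g2 x) * indicator {a<..} x)
     = integral\<^sup>L lborel (\<lambda>x. indicator {0..t} x * (g1 x - g2 x) * indicator {c<..<t} x)"
    by (rule integral_cong_AE)
  then show ?thesis using z by simp
qed

lemma wd_unique:
  assumes hc: "continuous_on {0..t} h" and wd1: "weak_deriv t h g1" and wd2: "weak_deriv t h g2"
    and t: "0 \<le> t"
  shows "AE x in lborel. x \<in> {0..t} \<longrightarrow> g1 x = g2 x"
proof -
  define f where "f x = indicator {0..t} x * (g1 x - g2 x)" for x
  have g1i: "integrable lborel (\<lambda>x. indicator {0..t} x * g1 x)"
    using wd1 by (simp add: weak_deriv_def set_integrable_def)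
  have g2i: "integrable lborel (\<lambda>x. indicator {0..t} x * g2 x)"
    using wd2 by (simp add: weak_deriv_def set_integrable_def)
  have fi: "integrable lborel f" unfolding f_def using Bochner_Integration.integrable_diff[OF g1i g2i] by (simp add: algebra_simps)
  then have fm[measurable]: "f \<in> borel_measurable lborel" by (rule borel_measurable_integrable)
  define fp where "fp x = max 0 (f x)" for x
  define fn where "fn x = max 0 (- f x)" for x
  have fpi: "integrable lborel fp" unfolding fp_def using fi by (intro integrable_max) auto
  have fni: "integrable lborel fn" unfolding fn_def using fi by (intro integrable_max) auto
  have [measurable]: "fp \<in> borel_measurable lborel" "fn \<in> borel_measurable lborel"
    using fpi fni by (auto intro: borel_measurable_integrable)
  have fpn: "f x = fp x - fn x" for x by (simp add: fp_def fn_def)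
  have ifa: "integral\<^sup>L lborel (\<lambda>x. f x * indicator {a<..} x) = 0" for a
  proof (cases "a < t")
    case True then show ?thesis using wd_int_zero[OF hc wd1 wd2 True t] by (simp add: f_def)
  next
    case False
    have "(\<lambda>x. f x * indicator {a<..} x) = (\<lambda>x. 0)" using False by (auto simp: f_def indicator_def)
    then show ?thesis by simp
  qed
  have ennr: "emeasure (density lborel (\<lambda>x. ennreal (q x))) {a<..} = ennreal (integral\<^sup>L lborel (\<lambda>x. q x * indicator {a<..} x))"
    if qi: "integrable lborel q" and qn: "\<And>x. q x \<ge> 0" for q :: "real \<Rightarrow> real" and a
  proof -
    have [measurable]: "q \<in> borel_measurable lborel" using qi by (rule borel_measurable_integrable)
    have "emeasure (density lborel (\<lambda>x. ennreal (q x))) {a<..} = (\<integral>\<^sup>+ x. ennreal (q x) * indicator {a<..} x \<partial>lborel)"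
      by (rule emeasure_density) auto
    also have "\<dots> = (\<integral>\<^sup>+ x. ennreal (q x * indicator {a<..} x) \<partial>lborel)"
      by (intro nn_integral_cong) (auto simp: indicator_def)
    also have "\<dots> = ennreal (integral\<^sup>L lborel (\<lambda>x. q x * indicator {a<..} x))"
      by (rule nn_integral_eq_integral) (use qi qn in \<open>auto intro: integrable_real_mult_indicator\<close>)
    finally show ?thesis .
  qed
  have "density lborel (\<lambda>x. ennreal (fp x)) = density lborel (\<lambda>x. ennreal (fn x))"
  proof (rule measure_eqI_lessThan)
    show "sets (density lborel (\<lambda>x. ennreal (fp x))) = sets borel" by simp
    show "sets (density lborel (\<lambda>x. ennreal (fn x))) = sets borel" by simp
    fix a
    show "emeasure (density lborel (\<lambda>x. ennreal (fp x))) {a<..} < \<infinity>"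
      using ennr[OF fpi, of a] by (simp add: fp_def)
    have ip: "integrable lborel (\<lambda>x. fp x * indicator {a<..} x)" using fpi by (intro integrable_real_mult_indicator) simp_all
    have in': "integrable lborel (\<lambda>x. fn x * indicator {a<..} x)" using fni by (intro integrable_real_mult_indicator) simp_all
    have "integral\<^sup>L lborel (\<lambda>x. fp x * indicator {a<..} x) - integral\<^sup>L lborel (\<lambda>x. fn x * indicator {a<..} x)
        = integral\<^sup>L lborel (\<lambda>x. f x * indicator {a<..} x)"
      using ip in' by (simp add: fpn left_diff_distrib)
    then have "integral\<^sup>L lborel (\<lambda>x. fp x * indicator {a<..} x) = integral\<^sup>L lborel (\<lambda>x. fn x * indicator {a<..} x)"
      using ifa[of a] by simp
    then show "emeasure (density lborel (\<lambda>x. ennreal (fp x))) {a<..} = emeasure (density lborel (\<lambda>x. ennreal (fn x))) {a<..}"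
      using ennr[OF fpi, of a] ennr[OF fni, of a] by (simp add: fp_def fn_def)
  qed
  then have "AE x in lborel. ennreal (fp x) = ennreal (fn x)"
    by (subst (asm) sigma_finite_measure.density_unique_iff[OF lborel.sigma_finite_measure_axioms]) auto
  then show ?thesis
  proof eventually_elim
    case (elim x)
    then have "fp x = fn x" by (simp add: fp_def fn_def)
    then have "f x = 0" using fpn by simp
    then show ?case by (auto simp: f_def indicator_def split: if_splits)
  qed
qed


lemma sq_int_nonneg: "(LINT u:A|lborel. (f u)\<^sup>2) \<ge> (0::real)"
  unfolding set_lebesgue_integral_def by (rule Bochner_Integration.integral_nonneg) (auto simp: indicator_def)

lemma sob_bound:
  assumes h: "h \<in> sobolev t m" and m: "m \<ge> 1" and N: "sob_norm t m h \<le> 1"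
  obtains g where "weak_deriv t h g" "set_integrable lborel {0..t} (\<lambda>u. (g u)\<^sup>2)"
    "(LINT u:{0..t}|lborel. (g u)\<^sup>2) \<le> 1" "set_integrable lborel {0..t} (\<lambda>u. (h u)\<^sup>2)"
    "(LINT u:{0..t}|lborel. (h u)\<^sup>2) \<le> 1"
proof -
  define D where "D = (SOME D. sob_derivs t m h D)"
  have "\<exists>D. sob_derivs t m h D" using h by (simp add: sobolev_def)
  then have D: "sob_derivs t m h D" unfolding D_def by (rule someI_ex)
  have D0: "D 0 = h" using D by (simp add: sob_derivs_def)
  have wd: "weak_deriv t h (D 1)" using D m D0 by (auto simp: sob_derivs_def)
  have ik: "\<forall>k\<le>m. set_integrable lborel {0..t} (\<lambda>u. (D k u)\<^sup>2)" using D unfolding sob_derivs_def by blast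
  have i0: "set_integrable lborel {0..t} (\<lambda>u. (D 0 u)\<^sup>2)" using ik by blast
  have i1: "set_integrable lborel {0..t} (\<lambda>u. (D 1 u)\<^sup>2)" using ik m by blast
  have sn: "sob_norm t m h = sqrt (\<Sum>k\<le>m. LINT u:{0..t}|lborel. (D k u)\<^sup>2)"
    by (simp add: sob_norm_def D_def Let_def)
  have "(\<Sum>k\<in>{0,1}. LINT u:{0..t}|lborel. (D k u)\<^sup>2) \<le> (\<Sum>k\<le>m. LINT u:{0..t}|lborel. (D k u)\<^sup>2)"
    by (rule sum_mono2) (use m in \<open>auto intro: sq_int_nonneg\<close>)
  moreover have "(\<Sum>k\<le>m. LINT u:{0..t}|lborel. (D k u)\<^sup>2) \<le> 1"
    using N sn by (metis real_sqrt_le_1_iff)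
  ultimately have s: "(LINT u:{0..t}|lborel. (D 0 u)\<^sup>2) + (LINT u:{0..t}|lborel. (D 1 u)\<^sup>2) \<le> 1" by simp
  have "(LINT u:{0..t}|lborel. (D 0 u)\<^sup>2) \<le> 1" "(LINT u:{0..t}|lborel. (D 1 u)\<^sup>2) \<le> 1"
    using s sq_int_nonneg[of "{0..t}" "D 0"] sq_int_nonneg[of "{0..t}" "D 1"] by linarith+
  then show ?thesis using that[OF wd i1] i0 D0 by simp
qed

lemma abs_int_bound:
  assumes gi: "set_integrable lborel {0..t} g" and g2i: "set_integrable lborel {0..t} (\<lambda>u. (g u)\<^sup>2)"
    and g2: "(LINT u:{0..t}|lborel. (g u)\<^sup>2) \<le> 1" and ab: "0 \<le> a" "a \<le> b" "b \<le> t"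
  shows "(LINT u:{0..t}|lborel. \<bar>g u\<bar> * indicator {a<..<b} u) \<le> sqrt (b - a)"
proof (cases "a = b")
  case True then show ?thesis by simp
next
  case False
  then have ab': "a < b" using ab by simp
  define s where "s = sqrt (b - a)"
  have s: "s > 0" "s * s = b - a" using ab' by (auto simp: s_def)
  define c1 where "c1 = 1 / (2 * s)"
  define c2 where "c2 = s / 2"
  have ia: "set_integrable lborel {0..t} (\<lambda>u. \<bar>g u\<bar> * indicator {a<..<b} u)"
    unfolding set_integrable_def
  proof -
    have "integrable lborel (\<lambda>u. (indicator {0..t} u *\<^sub>R \<bar>g u\<bar>) * indicator {a<..<b} u)"
      by (intro integrable_real_mult_indicator) (use set_integrable_abs[OF gi] in \<open>auto simp: set_integrable_def\<close>)
    then show "integrable lborel (\<lambda>u. indicator {0..t} u *\<^sub>R (\<bar>g u\<bar> * indicator {a<..<b} u))" by (simp add: mult_ac)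
  qed
  have iind: "set_integrable lborel {0..t} (\<lambda>u. indicator {a<..<b} u :: real)"
    unfolding set_integrable_def
  proof -
    have "integrable lborel (\<lambda>u. (indicator {a<..<b} u :: real) * indicator {0..t} u)"
      using ab' by (intro integrable_real_mult_indicator) (auto simp: integrable_indicator_iff)
    then show "integrable lborel (\<lambda>u. indicator {0..t} u *\<^sub>R (indicator {a<..<b} u :: real))" by (simp add: mult_ac)
  qed
  have i1: "set_integrable lborel {0..t} (\<lambda>u. c1 * indicator {a<..<b} u)" using iind by (rule set_integrable_mult_right)
  have i2: "set_integrable lborel {0..t} (\<lambda>u. c2 * (g u)\<^sup>2)" using g2i by (rule set_integrable_mult_right)
  have ib: "set_integrable lborel {0..t} (\<lambda>u. c1 * indicator {a<..<b} u + c2 * (g u)\<^sup>2)"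
    using i1 i2 by (rule set_integral_add(1))
  have pw: "\<bar>g u\<bar> * indicator {a<..<b} u \<le> c1 * indicator {a<..<b} u + c2 * (g u)\<^sup>2" for u
  proof -
    have "0 \<le> (1 - s * \<bar>g u\<bar>)\<^sup>2" by simp
    then have "0 \<le> 1 + s\<^sup>2 * \<bar>g u\<bar>\<^sup>2 - 2 * s * \<bar>g u\<bar>" by (simp add: power2_diff power_mult_distrib)
    then have "2 * s * \<bar>g u\<bar> \<le> 1 + s\<^sup>2 * (g u)\<^sup>2" by simp
    then have "\<bar>g u\<bar> \<le> c1 + c2 * (g u)\<^sup>2" using s(1) unfolding c1_def c2_def
      by (simp add: field_simps power2_eq_square)
    moreover have "c2 * (g u)\<^sup>2 \<ge> 0" using s by (simp add: c2_def)
    ultimately show ?thesis by (auto simp: indicator_def)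
  qed
  have "(LINT u:{0..t}|lborel. \<bar>g u\<bar> * indicator {a<..<b} u) \<le> (LINT u:{0..t}|lborel. c1 * indicator {a<..<b} u + c2 * (g u)\<^sup>2)"
    by (rule set_integral_mono[OF ia ib pw])
  also have "\<dots> = c1 * (LINT u:{0..t}|lborel. indicator {a<..<b} u) + c2 * (LINT u:{0..t}|lborel. (g u)\<^sup>2)"
    using set_integral_add(2)[OF i1 i2] by simp
  also have "(LINT u:{0..t}|lborel. indicator {a<..<b} u) = b - a"
  proof -
    have "(LINT u:{0..t}|lborel. indicator {a<..<b} u) = integral\<^sup>L lborel (indicator {a<..<b} :: real \<Rightarrow> real)"
      unfolding set_lebesgue_integral_def using ab by (intro Bochner_Integration.integral_cong) (auto simp: indicator_def)
    also have "\<dots> = b - a" using ab' by (simp add: measure_def)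
    finally show ?thesis .
  qed
  also have "c1 * (b - a) + c2 * (LINT u:{0..t}|lborel. (g u)\<^sup>2) \<le> c1 * (b - a) + c2"
    using g2 s by (simp add: c2_def)
  also have "c1 * (b - a) + c2 = s"
  proof -
    have "c1 * (b - a) = (s * s) / (2 * s)" by (simp add: c1_def s(2)[symmetric])
    also have "\<dots> = s / 2" using s(1) by simp
    finally show ?thesis by (simp add: c2_def)
  qed
  finally show ?thesis by (simp add: s_def)
qed


lemma set_int_ind_integrable:
  assumes "set_integrable lborel A f" and that: "B \<in> sets lborel" shows "set_integrable lborel A (\<lambda>u. f u * indicator B u :: real)"
proof -
  have "integrable lborel (\<lambda>u. (indicator A u *\<^sub>R f u) * indicator B u)"
    by (intro integrable_real_mult_indicator that) (use assms in \<open>simp add: set_integrable_def\<close>)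
  then show ?thesis unfolding set_integrable_def by (simp add: mult_ac)
qed

lemma sob_mod:
  assumes hc: "continuous_on {0..t} h" and wd: "weak_deriv t h g"
    and g2i: "set_integrable lborel {0..t} (\<lambda>u. (g u)\<^sup>2)" and g2: "(LINT u:{0..t}|lborel. (g u)\<^sup>2) \<le> 1"
    and ab: "0 \<le> a" "a \<le> b" "b \<le> t"
  shows "\<bar>h b - h a\<bar> \<le> sqrt (b - a)"
proof -
  have gi: "set_integrable lborel {0..t} g" using wd by (simp add: weak_deriv_def)
  have gii: "set_integrable lborel {0..t} (\<lambda>u. g u * indicator {a<..<b} u)"
    using gi by (rule set_int_ind_integrable) simp
  have "\<bar>h b - h a\<bar> = \<bar>LINT u:{0..t}|lborel. g u * indicator {a<..<b} u\<bar>" using key[OF hc wd ab] by simp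
  also have "\<dots> \<le> (LINT u:{0..t}|lborel. norm (g u * indicator {a<..<b} u))"
    using set_integral_norm_bound[OF gii] by simp
  also have "\<dots> = (LINT u:{0..t}|lborel. \<bar>g u\<bar> * indicator {a<..<b} u)"
    by (simp add: abs_mult)
  also have "\<dots> \<le> sqrt (b - a)" using abs_int_bound[OF gi g2i g2 ab] .
  finally show ?thesis .
qed

lemma sob_sup:
  assumes t: "t > 0" and hc: "continuous_on {0..t} h" and wd: "weak_deriv t h g"
    and g2i: "set_integrable lborel {0..t} (\<lambda>u. (g u)\<^sup>2)" and g2: "(LINT u:{0..t}|lborel. (g u)\<^sup>2) \<le> 1"
    and h2i: "set_integrable lborel {0..t} (\<lambda>u. (h u)\<^sup>2)" and h2: "(LINT u:{0..t}|lborel. (h u)\<^sup>2) \<le> 1"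
    and x: "x \<in> {0..t}"
  shows "\<bar>h x\<bar> \<le> (1 + 1 / t) / 2 + sqrt t"
proof -
  have "continuous_on {0..t} (\<lambda>u. (h u)\<^sup>2)" by (intro continuous_intros hc)
  then obtain y where y: "y \<in> {0..t}" "\<And>u. u \<in> {0..t} \<Longrightarrow> (h y)\<^sup>2 \<le> (h u)\<^sup>2"
    using continuous_attains_inf[of "{0..t}" "\<lambda>u. (h u)\<^sup>2"] t by auto
  have ci: "set_integrable lborel {0..t} (\<lambda>u. (h y)\<^sup>2)"
    by (rule cont_set_integrable) simp
  have "(LINT u:{0..t}|lborel. (h y)\<^sup>2) \<le> (LINT u:{0..t}|lborel. (h u)\<^sup>2)"
    by (rule set_integral_mono[OF ci h2i]) (use y in auto)
  moreover have "(LINT u:{0..t}|lborel. (h y)\<^sup>2) = t * (h y)\<^sup>2"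
    using t by (simp add: set_integral_const measure_def)
  ultimately have "t * (h y)\<^sup>2 \<le> 1" using h2 by simp
  then have hy2: "(h y)\<^sup>2 \<le> 1 / t" using t by (simp add: field_simps mult.commute)
  have hy: "\<bar>h y\<bar> \<le> (1 + 1 / t) / 2"
  proof -
    have "0 \<le> (1 - \<bar>h y\<bar>)\<^sup>2" by simp
    then have "2 * \<bar>h y\<bar> \<le> 1 + (h y)\<^sup>2" by (simp add: power2_diff)
    then show ?thesis using hy2 by simp
  qed
  have d: "\<bar>h x - h y\<bar> \<le> sqrt t"
  proof (cases "y \<le> x")
    case True
    then have "\<bar>h x - h y\<bar> \<le> sqrt (x - y)" using sob_mod[OF hc wd g2i g2, of y x] x y by simp
    also have "\<dots> \<le> sqrt t" using x y by simp
    finally show ?thesis .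
  next
    case False
    then have "\<bar>h y - h x\<bar> \<le> sqrt (y - x)" using sob_mod[OF hc wd g2i g2, of x y] x y by simp
    also have "\<dots> \<le> sqrt t" using x y by simp
    finally show ?thesis by (simp add: abs_minus_commute)
  qed
  show ?thesis using hy d by linarith
qed


lemma cadlag_left_tendsto:
  assumes "cadlag_on t Z" "s \<in> {0<..t}"
  shows "(Z \<longlongrightarrow> left_lim Z s) (at_left s)"
proof -
  obtain l where l: "(Z \<longlongrightarrow> l) (at_left s)" using assms unfolding cadlag_on_def by blast
  have "Lim (at_left s) Z = l" by (rule tendsto_Lim) (use l in auto)
  then show ?thesis using l assms by (simp add: left_lim_def)
qed

lemma cadlag_local_bound:
  assumes cd: "cadlag_on t Z" and x: "x \<in> {0..t}"
  shows "\<exists>\<delta>>0. \<exists>B. \<forall>y\<in>{0..t}. dist y x < \<delta> \<longrightarrow> \<bar>Z y\<bar> \<le> B"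
proof -
  have R: "\<exists>b>x. \<forall>y. x < y \<and> y < b \<longrightarrow> \<bar>Z y\<bar> \<le> \<bar>Z x\<bar> + 1" if "x < t"
  proof -
    have "continuous (at_right x) Z" using cd that x by (simp add: cadlag_on_def)
    then have "(Z \<longlongrightarrow> Z x) (at_right x)" by (simp add: continuous_within)
    then have "eventually (\<lambda>y. dist (Z y) (Z x) < 1) (at_right x)" unfolding tendsto_iff by simp
    then obtain b where "b > x" "\<forall>y>x. y < b \<longrightarrow> dist (Z y) (Z x) < 1" unfolding eventually_at_right_field by blast
    then show ?thesis by (intro exI[of _ b]) (auto simp: dist_real_def)
  qed
  have L: "\<exists>b<x. \<exists>B. \<forall>y. b < y \<and> y < x \<longrightarrow> \<bar>Z y\<bar> \<le> B" if "0 < x"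
  proof -
    have "(Z \<longlongrightarrow> left_lim Z x) (at_left x)" using cadlag_left_tendsto[OF cd] that x by simp
    then have "eventually (\<lambda>y. dist (Z y) (left_lim Z x) < 1) (at_left x)" unfolding tendsto_iff by simp
    then obtain b where "b < x" "\<forall>y>b. y < x \<longrightarrow> dist (Z y) (left_lim Z x) < 1" unfolding eventually_at_left_field by blast
    then have "\<forall>y. b < y \<and> y < x \<longrightarrow> \<bar>Z y\<bar> \<le> \<bar>left_lim Z x\<bar> + 1" by (auto simp: dist_real_def)
    then show ?thesis using \<open>b < x\<close> by blast
  qed
  obtain bR where bR: "bR > x" "\<forall>y. x < y \<and> y < bR \<and> y \<le> t \<longrightarrow> \<bar>Z y\<bar> \<le> \<bar>Z x\<bar> + 1"
  proof (cases "x < t")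
    case True then show ?thesis using R that by blast
  next
    case False then show ?thesis using that[of "x + 1"] x by auto
  qed
  obtain bL BL where bL: "bL < x" "\<forall>y. bL < y \<and> y < x \<and> 0 \<le> y \<longrightarrow> \<bar>Z y\<bar> \<le> BL"
  proof (cases "0 < x")
    case True then show ?thesis using L that by blast
  next
    case False then show ?thesis using that[of "x - 1" 0] x by auto
  qed
  define \<delta> where "\<delta> = min (bR - x) (x - bL)"
  have "\<delta> > 0" using bR bL by (simp add: \<delta>_def)
  moreover have "\<forall>y\<in>{0..t}. dist y x < \<delta> \<longrightarrow> \<bar>Z y\<bar> \<le> max (\<bar>Z x\<bar> + 1) BL"
  proof (intro ballI impI)
    fix y assume y: "y \<in> {0..t}" "dist y x < \<delta>"
    then have "bL < y" "y < bR" by (auto simp: \<delta>_def dist_real_def)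
    then show "\<bar>Z y\<bar> \<le> max (\<bar>Z x\<bar> + 1) BL"
      using bR(2)[rule_format, of y] bL(2)[rule_format, of y] y by (cases "x < y"; cases "y < x") auto
  qed
  ultimately show ?thesis by blast
qed

lemma cadlag_bounded:
  assumes cd: "cadlag_on t Z" and t: "0 \<le> t"
  shows "\<exists>M\<ge>0. \<forall>y\<in>{0..t}. \<bar>Z y\<bar> \<le> M"
proof -
  have "\<forall>x\<in>{0..t}. \<exists>\<delta>>0. \<exists>B. \<forall>y\<in>{0..t}. dist y x < \<delta> \<longrightarrow> \<bar>Z y\<bar> \<le> B"
    using cadlag_local_bound[OF cd] by blast
  then obtain \<delta> B where dB: "\<And>x. x \<in> {0..t} \<Longrightarrow> \<delta> x > 0 \<and> (\<forall>y\<in>{0..t}. dist y x < \<delta> x \<longrightarrow> \<bar>Z y\<bar> \<le> B x)"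
    by metis
  obtain C where C: "C \<subseteq> {0..t}" "finite C" "{0..t} \<subseteq> (\<Union>c\<in>C. ball c (\<delta> c))"
  proof (rule compactE_image[of "{0..t}" "{0..t}" "\<lambda>c. ball c (\<delta> c)"])
    show "compact {0..t::real}" by simp
    show "\<And>c. c \<in> {0..t} \<Longrightarrow> open (ball c (\<delta> c))" by simp
    show "{0..t} \<subseteq> (\<Union>c\<in>{0..t}. ball c (\<delta> c))" using dB by force
  qed blast
  define M where "M = (\<Sum>c\<in>C. \<bar>B c\<bar>)"
  have "M \<ge> 0" by (simp add: M_def sum_nonneg)
  moreover have "\<bar>Z y\<bar> \<le> M" if y: "y \<in> {0..t}" for y
  proof -
    obtain c where c: "c \<in> C" "y \<in> ball c (\<delta> c)" using C y by blast
    then have "\<bar>Z y\<bar> \<le> B c" using dB[of c] C y by (auto simp: dist_commute)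
    also have "\<dots> \<le> \<bar>B c\<bar>" by simp
    also have "\<dots> \<le> M" unfolding M_def using c C by (intro member_le_sum) auto
    finally show ?thesis .
  qed
  ultimately show ?thesis by blast
qed

lemma cadlag_bounded2:
  assumes cd: "cadlag_on t Z" and t: "0 \<le> t"
  shows "\<exists>M\<ge>0. \<forall>y\<in>{0..t}. \<bar>Z y\<bar> \<le> M \<and> \<bar>left_lim Z y\<bar> \<le> M"
proof -
  obtain M where M: "M \<ge> 0" "\<forall>y\<in>{0..t}. \<bar>Z y\<bar> \<le> M" using cadlag_bounded[OF cd t] by blast
  have "\<bar>left_lim Z y\<bar> \<le> M" if y: "y \<in> {0..t}" for y
  proof (cases "y \<le> 0")
    case True then show ?thesis using M y by (simp add: left_lim_def)
  next
    case False
    then have lt: "((\<lambda>x. \<bar>Z x\<bar>) \<longlongrightarrow> \<bar>left_lim Z y\<bar>) (at_left y)"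
      using cadlag_left_tendsto[OF cd] y by (intro tendsto_rabs) auto
    have "eventually (\<lambda>x. 0 < x \<and> x < y) (at_left y)"
      using False by (auto simp: eventually_at_left_field intro!: exI[of _ 0])
    then have "eventually (\<lambda>x. \<bar>Z x\<bar> \<le> M) (at_left y)"
      by eventually_elim (use M y in auto)
    then show ?thesis using lt by (intro tendsto_upperbound) auto
  qed
  then show ?thesis using M by blast
qed

lemma left_lim_measurable:
  assumes cd: "cadlag_on t Z"
  shows "(\<lambda>x. indicator {0..t} x * left_lim Z x) \<in> borel_measurable lborel"
proof -
  define v where "v k x = (real_of_int \<lceil>real (Suc k) * x\<rceil> - 1) / real (Suc k)" for k x
  define f where "f k x = indicator {0<..t} x * Z (v k x)" for k x
  have vb: "x - 1 / real (Suc k) \<le> v k x \<and> v k x < x" for k x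
  proof -
    have c: "real_of_int \<lceil>real (Suc k) * x\<rceil> - 1 < real (Suc k) * x"
      "real (Suc k) * x \<le> real_of_int \<lceil>real (Suc k) * x\<rceil>"
      using ceiling_correct[of "real (Suc k) * x"] by auto
    have "v k x < x" using c(1) by (simp add: v_def divide_less_eq mult.commute)
    moreover have "x - 1 / real (Suc k) \<le> v k x"
    proof -
      have "(real (Suc k) * x - 1) / real (Suc k) \<le> v k x"
        unfolding v_def by (rule divide_right_mono) (use c(2) in auto)
      moreover have "(real (Suc k) * x - 1) / real (Suc k) = x - 1 / real (Suc k)"
        by (simp add: diff_divide_distrib)
      ultimately show ?thesis by simp
    qed
    ultimately show ?thesis by simp
  qed
  have fm: "f k \<in> borel_measurable lborel" for k
  proof -
    have g: "(\<lambda>x. \<lceil>real (Suc k) * x\<rceil>) \<in> measurable lborel (count_space UNIV)" by measurable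
    have "(\<lambda>x. (\<lambda>j::int. Z ((real_of_int j - 1) / real (Suc k))) \<lceil>real (Suc k) * x\<rceil>) \<in> borel_measurable lborel"
      by (rule measurable_compose[OF g]) simp
    then have "(\<lambda>x. Z (v k x)) \<in> borel_measurable lborel" by (simp add: v_def)
    then show ?thesis unfolding f_def by measurable
  qed
  have lim: "(\<lambda>k. f k x) \<longlonglongrightarrow> indicator {0<..t} x * left_lim Z x" for x
  proof (cases "x \<in> {0<..t}")
    case True
    have vl: "(\<lambda>k. v k x) \<longlonglongrightarrow> x"
    proof (rule tendsto_sandwich[where f = "\<lambda>k. x - 1 / real (Suc k)" and h = "\<lambda>k. x"])
      show "\<forall>\<^sub>F k in sequentially. x - 1 / real (Suc k) \<le> v k x" using vb by simp
      show "\<forall>\<^sub>F k in sequentially. v k x \<le> x" using vb by (simp add: less_imp_le)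
      have "(\<lambda>k. 1 / real (Suc k)) \<longlonglongrightarrow> 0" using lim_inverse_n'
        by (rule LIMSEQ_Suc)
      then show "(\<lambda>k. x - 1 / real (Suc k)) \<longlonglongrightarrow> x" using tendsto_diff[OF tendsto_const, of _ 0 sequentially x] by simp
    qed simp
    have "filterlim (\<lambda>k. v k x) (at_left x) sequentially"
      unfolding filterlim_at using vl vb by (auto simp: less_imp_neq)
    then have "(\<lambda>k. Z (v k x)) \<longlonglongrightarrow> left_lim Z x"
      using cadlag_left_tendsto[OF cd True] by (rule filterlim_compose[rotated])
    then show ?thesis using True by (simp add: f_def)
  next
    case False then show ?thesis by (simp add: f_def)
  qed
  have m1: "(\<lambda>x. indicator {0<..t} x * left_lim Z x) \<in> borel_measurable lborel"
    by (rule borel_measurable_LIMSEQ_real[OF lim fm])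
  have "(\<lambda>x. indicator {0..t} x * left_lim Z x) = (\<lambda>x. indicator {0<..t} x * left_lim Z x + indicator {0} x * (if 0 \<le> t then Z 0 else 0))"
    by (auto simp: indicator_def left_lim_def)
  then show ?thesis using m1 by simp
qed


lemma int_mult_bounded:
  fixes A :: "real set" and f g :: "real \<Rightarrow> real"
  assumes fi: "set_integrable lborel A f" and gm: "(\<lambda>x. indicator A x * g x) \<in> borel_measurable lborel"
    and gb: "\<forall>x\<in>A. \<bar>g x\<bar> \<le> B"
  shows "set_integrable lborel A (\<lambda>x. g x * f x :: real)"
proof -
  have "integrable lborel (\<lambda>x. indicator A x * f x)" using fi by (simp add: set_integrable_def)
  then have bi: "integrable lborel (\<lambda>x. B * (indicator A x * f x))" by simp
  have fm: "(\<lambda>x. indicator A x * f x) \<in> borel_measurable lborel"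
    using fi by (simp add: set_integrable_def borel_measurable_integrable)
  have "(\<lambda>x. indicator A x *\<^sub>R (g x * f x)) = (\<lambda>x. (indicator A x * g x) * (indicator A x * f x))"
    by (auto simp: indicator_def)
  then have m: "(\<lambda>x. indicator A x *\<^sub>R (g x * f x)) \<in> borel_measurable lborel" using gm fm by simp
  have ae: "AE x in lborel. norm (indicator A x *\<^sub>R (g x * f x)) \<le> norm (B * (indicator A x * f x))"
  proof (intro AE_I2)
    fix x show "norm (indicator A x *\<^sub>R (g x * f x)) \<le> norm (B * (indicator A x * f x))"
    proof (cases "x \<in> A")
      case True
      then have "\<bar>g x\<bar> \<le> B" using gb by blast
      then have "\<bar>g x\<bar> * \<bar>f x\<bar> \<le> \<bar>B\<bar> * \<bar>f x\<bar>" by (intro mult_right_mono) auto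
      then show ?thesis using True by (simp add: abs_mult)
    qed simp
  qed
  show ?thesis unfolding set_integrable_def using Bochner_Integration.integrable_bound[OF bi m ae] .
qed

lemma cont_ind_measurable:
  fixes g :: "real \<Rightarrow> real"
  assumes "continuous_on {a..b} g" shows "(\<lambda>x. indicator {a..b} x * g x) \<in> borel_measurable lborel"
  using borel_measurable_continuous_on_indicator[of "{a..b}" g] assms by simp

lemma cont_bounded:
  fixes g :: "real \<Rightarrow> real"
  assumes "continuous_on {a..b} g" shows "\<exists>B. \<forall>x\<in>{a..b}. \<bar>g x :: real\<bar> \<le> B"
proof -
  have "compact (g ` {a..b})" using assms by (intro compact_continuous_image) (auto simp: compact_Icc)
  then have "bounded (g ` {a..b})" by (rule compact_imp_bounded)
  then show ?thesis unfolding bounded_pos by force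
qed

lemma int_mult_cont:
  fixes f g :: "real \<Rightarrow> real"
  assumes fi: "set_integrable lborel {a..b} f" and gc: "continuous_on {a..b} g"
  shows "set_integrable lborel {a..b} (\<lambda>x. f x * g x :: real)"
proof -
  obtain B where "\<forall>x\<in>{a..b}. \<bar>g x\<bar> \<le> B" using cont_bounded[OF gc] by blast
  from int_mult_bounded[OF fi cont_ind_measurable[OF gc] this] show ?thesis by (simp add: mult.commute)
qed

lemma test_fun_cont:
  assumes "test_fun t \<phi>" shows "continuous_on A \<phi>" "continuous_on A (deriv \<phi>)"
proof -
  have d: "\<forall>k x. ((deriv ^^ k) \<phi>) differentiable (at x)" using assms by (simp add: test_fun_def)
  have "\<phi> differentiable (at x)" for x using d[rule_format, of 0 x] by simp
  then show "continuous_on A \<phi>" by (meson continuous_at_imp_continuous_on differentiable_imp_continuous_within)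
  have "deriv \<phi> differentiable (at x)" for x using d[rule_format, of 1 x] by simp
  then show "continuous_on A (deriv \<phi>)" by (meson continuous_at_imp_continuous_on differentiable_imp_continuous_within)
qed

lemma weak_deriv_lin:
  assumes w1: "weak_deriv t h1 g1" and w2: "weak_deriv t h2 g2"
  shows "weak_deriv t (\<lambda>u. a * h1 u + b * h2 u) (\<lambda>u. a * g1 u + b * g2 u)"
proof -
  have i: "set_integrable lborel {0..t} h1" "set_integrable lborel {0..t} h2"
     "set_integrable lborel {0..t} g1" "set_integrable lborel {0..t} g2"
    using w1 w2 by (auto simp: weak_deriv_def)
  have ih: "set_integrable lborel {0..t} (\<lambda>u. a * h1 u + b * h2 u)"
    using i by (intro set_integral_add(1) set_integrable_mult_right) auto
  have ig: "set_integrable lborel {0..t} (\<lambda>u. a * g1 u + b * g2 u)"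
    using i by (intro set_integral_add(1) set_integrable_mult_right) auto
  have eq: "(LINT u:{0..t}|lborel. (a * h1 u + b * h2 u) * deriv \<phi> u) = - (LINT u:{0..t}|lborel. (a * g1 u + b * g2 u) * \<phi> u)"
    if tf: "test_fun t \<phi>" for \<phi>
  proof -
    have c: "continuous_on {0..t} \<phi>" "continuous_on {0..t} (deriv \<phi>)" using test_fun_cont[OF tf] by auto
    have j1: "set_integrable lborel {0..t} (\<lambda>u. h1 u * deriv \<phi> u)" using int_mult_cont[OF i(1) c(2)] .
    have j2: "set_integrable lborel {0..t} (\<lambda>u. h2 u * deriv \<phi> u)" using int_mult_cont[OF i(2) c(2)] .
    have k1: "set_integrable lborel {0..t} (\<lambda>u. g1 u * \<phi> u)" using int_mult_cont[OF i(3) c(1)] .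
    have k2: "set_integrable lborel {0..t} (\<lambda>u. g2 u * \<phi> u)" using int_mult_cont[OF i(4) c(1)] .
    have e1: "(LINT u:{0..t}|lborel. h1 u * deriv \<phi> u) = - (LINT u:{0..t}|lborel. g1 u * \<phi> u)"
      using w1 tf by (simp add: weak_deriv_def)
    have e2: "(LINT u:{0..t}|lborel. h2 u * deriv \<phi> u) = - (LINT u:{0..t}|lborel. g2 u * \<phi> u)"
      using w2 tf by (simp add: weak_deriv_def)
    have "(LINT u:{0..t}|lborel. (a * h1 u + b * h2 u) * deriv \<phi> u)
        = (LINT u:{0..t}|lborel. a * (h1 u * deriv \<phi> u) + b * (h2 u * deriv \<phi> u))"
      by (simp add: algebra_simps)
    also have "\<dots> = a * (LINT u:{0..t}|lborel. h1 u * deriv \<phi> u) + b * (LINT u:{0..t}|lborel. h2 u * deriv \<phi> u)"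
      using j1 j2 by (subst set_integral_add(2)) auto
    also have "\<dots> = - (a * (LINT u:{0..t}|lborel. g1 u * \<phi> u) + b * (LINT u:{0..t}|lborel. g2 u * \<phi> u))"
      using e1 e2 by simp
    also have "a * (LINT u:{0..t}|lborel. g1 u * \<phi> u) + b * (LINT u:{0..t}|lborel. g2 u * \<phi> u)
        = (LINT u:{0..t}|lborel. a * (g1 u * \<phi> u) + b * (g2 u * \<phi> u))"
      using k1 k2 by (subst set_integral_add(2)) auto
    also have "\<dots> = (LINT u:{0..t}|lborel. (a * g1 u + b * g2 u) * \<phi> u)"
      by (simp add: algebra_simps)
    finally show ?thesis .
  qed
  show ?thesis using ih ig eq by (simp add: weak_deriv_def)
qed

lemma wderiv_ok:
  assumes h: "h \<in> sobolev t m" and m: "m \<ge> 1"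
  shows "weak_deriv t h (wderiv t h)" "continuous_on {0..t} h"
proof -
  obtain D where D: "sob_derivs t m h D" using h by (auto simp: sobolev_def)
  then have "weak_deriv t h (D 1)" using m by (auto simp: sob_derivs_def)
  then show "weak_deriv t h (wderiv t h)" unfolding wderiv_def by (rule someI[of "weak_deriv t h"])
  show "continuous_on {0..t} h" using h by (simp add: sobolev_def)
qed


lemma set_int_cong_AE:
  fixes f g :: "real \<Rightarrow> real"
  assumes "set_integrable lborel A f" "set_integrable lborel A g" "AE x in lborel. x \<in> A \<longrightarrow> f x = g x"
  shows "(LINT x:A|lborel. f x) = (LINT x:A|lborel. g x)"
  unfolding set_lebesgue_integral_def
proof (rule integral_cong_AE)
  show "(\<lambda>x. indicator A x *\<^sub>R f x) \<in> borel_measurable lborel" "(\<lambda>x. indicator A x *\<^sub>R g x) \<in> borel_measurable lborel"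
    using assms(1,2) by (auto simp: set_integrable_def intro: borel_measurable_integrable)
  show "AE x in lborel. indicator A x *\<^sub>R f x = indicator A x *\<^sub>R g x"
    using assms(3) by eventually_elim (auto simp: indicator_def)
qed

lemma zero_weak: "weak_deriv t (\<lambda>u. 0) (\<lambda>u. 0)"
  by (simp add: weak_deriv_def set_integrable_def)

lemma zero_sob:
  assumes t: "0 \<le> t"
  shows "(\<lambda>u. 0::real) \<in> sobolev t m" "sob_norm t m (\<lambda>u. 0) = 0"
proof -
  have sd: "sob_derivs t m (\<lambda>u. 0) (\<lambda>k u. 0)"
    by (simp add: sob_derivs_def zero_weak set_integrable_def set_borel_measurable_def)
  then show "(\<lambda>u. 0::real) \<in> sobolev t m" by (auto simp: sobolev_def)
  define D where "D = (SOME D. sob_derivs t m (\<lambda>u. 0::real) D)"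
  have D: "sob_derivs t m (\<lambda>u. 0) D" unfolding D_def using sd by (rule someI[of "sob_derivs t m (\<lambda>u. 0)"])
  have ae: "AE x in lborel. x \<in> {0..t} \<longrightarrow> D k x = 0" if "k \<le> m" for k
    using that
  proof (induction k)
    case 0 then show ?case using D by (simp add: sob_derivs_def)
  next
    case (Suc k)
    have ih: "AE x in lborel. x \<in> {0..t} \<longrightarrow> D k x = 0" using Suc by simp
    have wd: "weak_deriv t (D k) (D (Suc k))" using D Suc.prems by (simp add: sob_derivs_def)
    have "weak_deriv t (\<lambda>u. 0) (D (Suc k))"
      unfolding weak_deriv_def
    proof (intro conjI allI impI)
      show "set_integrable lborel {0..t} (\<lambda>u. 0::real)" by (simp add: set_integrable_def)
      show "set_integrable lborel {0..t} (D (Suc k))" using wd by (simp add: weak_deriv_def)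
      fix \<phi> assume tf: "test_fun t \<phi>"
      have di: "set_integrable lborel {0..t} (D k)" using wd by (simp add: weak_deriv_def)
      have "(LINT u:{0..t}|lborel. D k u * deriv \<phi> u) = (LINT u:{0..t}|lborel. 0)"
        by (rule set_int_cong_AE) (use int_mult_cont[OF di test_fun_cont(2)[OF tf]] ih in \<open>auto simp: set_integrable_def\<close>)
      then have "(LINT u:{0..t}|lborel. D (Suc k) u * \<phi> u) = 0"
        using wd tf by (simp add: weak_deriv_def)
      then show "(LINT u:{0..t}|lborel. 0 * deriv \<phi> u) = - (LINT u:{0..t}|lborel. D (Suc k) u * \<phi> u)"
        by simp
    qed
    from wd_unique[OF _ this zero_weak t] show ?case by simp
  qed
  have "(LINT u:{0..t}|lborel. (D k u)\<^sup>2) = 0" if "k \<le> m" for k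
  proof -
    have "(LINT u:{0..t}|lborel. (D k u)\<^sup>2) = (LINT u:{0..t}|lborel. 0)"
      by (rule set_int_cong_AE) (use D that ae[OF that] in \<open>auto simp: sob_derivs_def set_integrable_def\<close>)
    then show ?thesis by simp
  qed
  then show "sob_norm t m (\<lambda>u. 0) = 0" by (simp add: sob_norm_def D_def[symmetric] Let_def)
qed


locale Fb =
  fixes t :: real and F :: "real \<Rightarrow> real" and M :: real
  assumes FM: "(\<lambda>x. indicator {0..t} x * F x) \<in> borel_measurable lborel"
    and Fbd: "\<forall>u\<in>{0..t}. \<bar>F u\<bar> \<le> M"
begin

lemma F_int:
  assumes w: "set_integrable lborel {0..t} w" and s: "s \<le> t"
  shows "set_integrable lborel {0..s} (\<lambda>u. F u * w u)"
proof (cases "0 \<le> s")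
  case True
  have ws: "set_integrable lborel {0..s} w" by (rule set_integrable_subset[OF w]) (use s in auto)
  have "(\<lambda>x. indicator {0..s} x * F x) = (\<lambda>x. indicator {0..s} x * (indicator {0..t} x * F x))"
    using s by (auto simp: indicator_def)
  then have m: "(\<lambda>x. indicator {0..s} x * F x) \<in> borel_measurable lborel" using FM by simp
  show ?thesis by (rule int_mult_bounded[OF ws m]) (use Fbd s in auto)
next
  case False then show ?thesis by (simp add: set_integrable_def)
qed

lemma F_cong:
  assumes w1: "set_integrable lborel {0..t} w1" and w2: "set_integrable lborel {0..t} w2"
    and ae: "AE x in lborel. x \<in> {0..t} \<longrightarrow> w1 x = w2 x" and s: "s \<le> t"
  shows "(LINT u:{0..s}|lborel. F u * w1 u) = (LINT u:{0..s}|lborel. F u * w2 u)"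
  by (rule set_int_cong_AE[OF F_int[OF w1 s] F_int[OF w2 s]]) (use ae s in \<open>auto elim!: eventually_mono\<close>)

lemma F_lin:
  assumes w1: "set_integrable lborel {0..t} w1" and w2: "set_integrable lborel {0..t} w2" and s: "s \<le> t"
  shows "(LINT u:{0..s}|lborel. F u * (a * w1 u + b * w2 u)) = a * (LINT u:{0..s}|lborel. F u * w1 u) + b * (LINT u:{0..s}|lborel. F u * w2 u)"
proof -
  have "(LINT u:{0..s}|lborel. F u * (a * w1 u + b * w2 u)) = (LINT u:{0..s}|lborel. a * (F u * w1 u) + b * (F u * w2 u))"
    by (simp add: algebra_simps)
  also have "\<dots> = a * (LINT u:{0..s}|lborel. F u * w1 u) + b * (LINT u:{0..s}|lborel. F u * w2 u)"
    using F_int[OF w1 s] F_int[OF w2 s] by (subst set_integral_add(2)) auto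
  finally show ?thesis .
qed

lemma F_zero: "(LINT u:{0..0}|lborel. F u * w u) = 0"
  unfolding set_lebesgue_integral_def
proof (rule integral_eq_zero_AE)
  show "AE x in lborel. indicator {0..0} x *\<^sub>R (F x * w x) = 0"
    using AE_lborel_singleton[of 0] by eventually_elim (simp add: indicator_def)
qed

lemma F_diff:
  assumes w: "set_integrable lborel {0..t} w" and ab: "0 \<le> a" "a \<le> b" "b \<le> t"
  shows "\<bar>(LINT u:{0..b}|lborel. F u * w u) - (LINT u:{0..a}|lborel. F u * w u)\<bar>
     \<le> M * (LINT u:{0..t}|lborel. \<bar>w u\<bar> * indicator {a<..<b} u)"
proof -
  have ib: "integrable lborel (\<lambda>u. indicator {0..b} u *\<^sub>R (F u * w u))"
    using F_int[OF w ab(3)] by (simp add: set_integrable_def)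
  have ia: "integrable lborel (\<lambda>u. indicator {0..a} u *\<^sub>R (F u * w u))"
    using F_int[OF w] ab by (simp add: set_integrable_def)
  have iab: "integrable lborel (\<lambda>u. indicator {0..b} u *\<^sub>R (F u * w u) - indicator {0..a} u *\<^sub>R (F u * w u))"
    using ib ia by (rule Bochner_Integration.integrable_diff)
  have i2: "integrable lborel (\<lambda>u. (F u * w u) * indicator {a<..<b} u)"
  proof -
    have "integrable lborel (\<lambda>u. (indicator {0..b} u *\<^sub>R (F u * w u)) * indicator {a<..<b} u)"
      using ib by (intro integrable_real_mult_indicator) auto
    moreover have "(\<lambda>u. (indicator {0..b} u *\<^sub>R (F u * w u)) * indicator {a<..<b} u) = (\<lambda>u. (F u * w u) * indicator {a<..<b} u)"
      using ab by (auto simp: indicator_def)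
    ultimately show ?thesis by simp
  qed
  have iw: "integrable lborel (\<lambda>u. M * (indicator {0..t} u *\<^sub>R (\<bar>w u\<bar> * indicator {a<..<b} u)))"
  proof -
    have "set_integrable lborel {0..t} (\<lambda>u. \<bar>w u\<bar> * indicator {a<..<b} u)"
      using set_integrable_abs[OF w] by (rule set_int_ind_integrable) simp
    then show ?thesis by (simp add: set_integrable_def)
  qed
  have "(LINT u:{0..b}|lborel. F u * w u) - (LINT u:{0..a}|lborel. F u * w u)
      = integral\<^sup>L lborel (\<lambda>u. indicator {0..b} u *\<^sub>R (F u * w u) - indicator {0..a} u *\<^sub>R (F u * w u))"
    unfolding set_lebesgue_integral_def using ib ia by simp
  also have "\<dots> = integral\<^sup>L lborel (\<lambda>u. (F u * w u) * indicator {a<..<b} u)"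
  proof (rule integral_cong_AE)
    show "(\<lambda>u. indicator {0..b} u *\<^sub>R (F u * w u) - indicator {0..a} u *\<^sub>R (F u * w u)) \<in> borel_measurable lborel"
      using iab by (rule borel_measurable_integrable)
    show "(\<lambda>u. (F u * w u) * indicator {a<..<b} u) \<in> borel_measurable lborel"
      using i2 by (rule borel_measurable_integrable)
    show "AE x in lborel. indicator {0..b} x *\<^sub>R (F x * w x) - indicator {0..a} x *\<^sub>R (F x * w x) = F x * w x * indicator {a<..<b} x"
      using AE_lborel_singleton[of b] by eventually_elim (use ab in \<open>auto simp: indicator_def\<close>)
  qed
  finally have eq: "(LINT u:{0..b}|lborel. F u * w u) - (LINT u:{0..a}|lborel. F u * w u) = integral\<^sup>L lborel (\<lambda>u. (F u * w u) * indicator {a<..<b} u)" .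
  have "\<bar>integral\<^sup>L lborel (\<lambda>u. (F u * w u) * indicator {a<..<b} u)\<bar> \<le> integral\<^sup>L lborel (\<lambda>u. norm ((F u * w u) * indicator {a<..<b} u))"
    using integral_norm_bound[of lborel "\<lambda>u. (F u * w u) * indicator {a<..<b} u"] by simp
  also have "\<dots> \<le> integral\<^sup>L lborel (\<lambda>u. M * (indicator {0..t} u *\<^sub>R (\<bar>w u\<bar> * indicator {a<..<b} u)))"
  proof (rule integral_mono)
    show "integrable lborel (\<lambda>u. norm ((F u * w u) * indicator {a<..<b} u))" using i2 by (rule integrable_norm)
    show "integrable lborel (\<lambda>u. M * (indicator {0..t} u *\<^sub>R (\<bar>w u\<bar> * indicator {a<..<b} u)))" by (rule iw)
    fix u show "norm ((F u * w u) * indicator {a<..<b} u) \<le> M * (indicator {0..t} u *\<^sub>R (\<bar>w u\<bar> * indicator {a<..<b} u))"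
    proof (cases "u \<in> {a<..<b}")
      case True
      then have "u \<in> {0..t}" using ab by auto
      then have "\<bar>F u\<bar> \<le> M" using Fbd by blast
      then have "\<bar>F u\<bar> * \<bar>w u\<bar> \<le> M * \<bar>w u\<bar>" by (intro mult_right_mono) auto
      then show ?thesis using True \<open>u \<in> {0..t}\<close> by (simp add: abs_mult)
    qed simp
  qed
  also have "\<dots> = M * (LINT u:{0..t}|lborel. \<bar>w u\<bar> * indicator {a<..<b} u)"
    by (simp add: set_lebesgue_integral_def)
  finally show ?thesis using eq by simp
qed

end


lemma dual_le:
  assumes "\<And>h. h \<in> sobolev t m \<Longrightarrow> sob_norm t m h \<le> 1 \<Longrightarrow> \<bar>L h\<bar> \<le> B"
  shows "dual_norm t m L \<le> ereal B"
  unfolding dual_norm_def using assms by (intro SUP_least) auto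

lemma dual_ge:
  assumes "0 \<le> t"
  shows "0 \<le> dual_norm t m L"
proof -
  have z: "(\<lambda>u. 0::real) \<in> {h \<in> sobolev t m. sob_norm t m h \<le> 1}" using zero_sob[OF assms] by simp
  have "ereal \<bar>L (\<lambda>u. 0)\<bar> \<le> dual_norm t m L" unfolding dual_norm_def by (rule SUP_upper[OF z])
  moreover have "0 \<le> ereal \<bar>L (\<lambda>u. 0)\<bar>" by simp
  ultimately show ?thesis by (rule order_trans[rotated])
qed

lemma dual_lim:
  assumes t: "0 \<le> t"
    and ev: "eventually (\<lambda>\<epsilon>. \<forall>h. h \<in> sobolev t m \<and> sob_norm t m h \<le> 1 \<longrightarrow> \<bar>L \<epsilon> h\<bar> \<le> \<beta> \<epsilon>) (at_right (0::real))"
    and \<beta>: "(\<beta> \<longlongrightarrow> 0) (at_right 0)"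
  shows "((\<lambda>\<epsilon>. dual_norm t m (L \<epsilon>)) \<longlongrightarrow> (0::ereal)) (at_right 0)"
proof (rule tendsto_sandwich[where f = "\<lambda>\<epsilon>. 0" and h = "\<lambda>\<epsilon>. ereal (\<beta> \<epsilon>)"])
  show "\<forall>\<^sub>F \<epsilon> in at_right 0. 0 \<le> dual_norm t m (L \<epsilon>)" using dual_ge[OF t] by simp
  show "\<forall>\<^sub>F \<epsilon> in at_right 0. dual_norm t m (L \<epsilon>) \<le> ereal (\<beta> \<epsilon>)"
    using ev by eventually_elim (auto intro: dual_le)
  show "((\<lambda>\<epsilon>. ereal (\<beta> \<epsilon>)) \<longlongrightarrow> 0) (at_right 0)" using tendsto_ereal[OF \<beta>] by (simp add: zero_ereal_def)
qed simp


lemma prod_bound: "\<bar>x\<bar> \<le> (A::real) \<Longrightarrow> \<bar>y\<bar> \<le> B \<Longrightarrow> \<bar>x * y\<bar> \<le> A * B"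
  by (simp add: abs_mult mult_mono')

lemma sqrt_at_right: "((\<lambda>\<epsilon>. sqrt \<epsilon>) \<longlongrightarrow> 0) (at_right (0::real))"
  using tendsto_real_sqrt[OF tendsto_ident_at[of 0 "{0<..}"]] by simp

theorem lemmaA3:
  fixes t :: real and m :: nat and Z :: "real \<Rightarrow> real"
  assumes "t > 0" and "m \<ge> 1" and "cadlag_on t Z"
  shows "(\<forall>s\<in>{0..t}. in_dual t m (pw_int t Z s)) \<and>
         (\<forall>s\<in>{0..<t}.
            ((\<lambda>\<epsilon>. dual_norm t m (\<lambda>h. pw_int t Z (s + \<epsilon>) h - pw_int t Z s h))
               \<longlongrightarrow> (0::ereal)) (at_right (0::real))) \<and>
         (\<forall>s\<in>{0<..t}. in_dual t m (pw_int_left t Z s) \<and>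
            ((\<lambda>\<epsilon>. dual_norm t m (\<lambda>h. pw_int t Z (s - \<epsilon>) h - pw_int_left t Z s h))
               \<longlongrightarrow> (0::ereal)) (at_right (0::real)))"
proof -
  have t0: "0 \<le> t" using assms(1) by simp
  obtain M where M: "M \<ge> 0" "\<forall>y\<in>{0..t}. \<bar>Z y\<bar> \<le> M \<and> \<bar>left_lim Z y\<bar> \<le> M"
    using cadlag_bounded2[OF assms(3) t0] by blast
  interpret Fb t "left_lim Z" M
    by unfold_locales (use left_lim_measurable[OF assms(3)] M in auto)
  define Kc where "Kc = (1 + 1 / t) / 2 + sqrt t"
  define JJ where "JJ h s = (LINT u:{0..s}|lborel. left_lim Z u * wderiv t h u)" for h s
  have pw: "pw_int t Z s h = h s * Z s - h 0 * Z 0 - JJ h s" for s h by (simp add: pw_int_def JJ_def)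
  have pwl: "pw_int_left t Z s h = h s * left_lim Z s - h 0 * Z 0 - JJ h s" for s h
    by (simp add: pw_int_left_def JJ_def)
  have JJ0: "JJ h 0 = 0" for h unfolding JJ_def by (rule F_zero)

  have facts: "(\<forall>x\<in>{0..t}. \<bar>h x\<bar> \<le> Kc) \<and>
      (\<forall>a b. 0 \<le> a \<longrightarrow> a \<le> b \<longrightarrow> b \<le> t \<longrightarrow> \<bar>h b - h a\<bar> \<le> sqrt (b - a)) \<and>
      (\<forall>a b. 0 \<le> a \<longrightarrow> a \<le> b \<longrightarrow> b \<le> t \<longrightarrow> \<bar>JJ h b - JJ h a\<bar> \<le> M * sqrt (b - a))"
    if hA: "h \<in> sobolev t m" "sob_norm t m h \<le> 1" for h
  proof -
    obtain g where g: "weak_deriv t h g" "set_integrable lborel {0..t} (\<lambda>u. (g u)\<^sup>2)"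
      "(LINT u:{0..t}|lborel. (g u)\<^sup>2) \<le> 1" "set_integrable lborel {0..t} (\<lambda>u. (h u)\<^sup>2)"
      "(LINT u:{0..t}|lborel. (h u)\<^sup>2) \<le> 1"
      using sob_bound[OF hA(1) assms(2) hA(2)] by blast
    have hc: "continuous_on {0..t} h" and ww: "weak_deriv t h (wderiv t h)"
      using wderiv_ok[OF hA(1) assms(2)] by auto
    have ae: "AE x in lborel. x \<in> {0..t} \<longrightarrow> wderiv t h x = g x" using wd_unique[OF hc ww g(1) t0] .
    have gi: "set_integrable lborel {0..t} g" using g(1) by (simp add: weak_deriv_def)
    have wi: "set_integrable lborel {0..t} (wderiv t h)" using ww by (simp add: weak_deriv_def)
    have JJg: "JJ h s = (LINT u:{0..s}|lborel. left_lim Z u * g u)" if "s \<le> t" for s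
      unfolding JJ_def using F_cong[OF wi gi ae that] .
    show ?thesis
    proof (intro conjI allI impI ballI)
      fix x assume "x \<in> {0..t}"
      then show "\<bar>h x\<bar> \<le> Kc" unfolding Kc_def using sob_sup[OF assms(1) hc g(1) g(2) g(3) g(4) g(5)] by blast
    next
      fix a b :: real assume ab: "0 \<le> a" "a \<le> b" "b \<le> t"
      show "\<bar>h b - h a\<bar> \<le> sqrt (b - a)" using sob_mod[OF hc g(1) g(2) g(3) ab] .
    next
      fix a b :: real assume ab: "0 \<le> a" "a \<le> b" "b \<le> t"
      have "\<bar>JJ h b - JJ h a\<bar> \<le> M * (LINT u:{0..t}|lborel. \<bar>g u\<bar> * indicator {a<..<b} u)"
        using F_diff[OF gi ab] JJg ab by simp
      also have "\<dots> \<le> M * sqrt (b - a)"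
        by (intro mult_left_mono abs_int_bound[OF gi g(2) g(3) ab] M(1))
      finally show "\<bar>JJ h b - JJ h a\<bar> \<le> M * sqrt (b - a)" .
    qed
  qed

  have JJlin: "JJ (\<lambda>u. a * h1 u + b * h2 u) s = a * JJ h1 s + b * JJ h2 s"
    if h: "h1 \<in> sobolev t m" "h2 \<in> sobolev t m" and s: "s \<le> t" for h1 h2 a b s
  proof -
    have w1: "weak_deriv t h1 (wderiv t h1)" "continuous_on {0..t} h1" using wderiv_ok[OF h(1) assms(2)] by auto
    have w2: "weak_deriv t h2 (wderiv t h2)" "continuous_on {0..t} h2" using wderiv_ok[OF h(2) assms(2)] by auto
    have wc: "weak_deriv t (\<lambda>u. a * h1 u + b * h2 u) (\<lambda>u. a * wderiv t h1 u + b * wderiv t h2 u)"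
      by (rule weak_deriv_lin[OF w1(1) w2(1)])
    then have wc': "weak_deriv t (\<lambda>u. a * h1 u + b * h2 u) (wderiv t (\<lambda>u. a * h1 u + b * h2 u))"
      unfolding wderiv_def by (rule someI[of "weak_deriv t (\<lambda>u. a * h1 u + b * h2 u)"])
    have cc: "continuous_on {0..t} (\<lambda>u. a * h1 u + b * h2 u)" by (intro continuous_intros w1(2) w2(2))
    have ae: "AE x in lborel. x \<in> {0..t} \<longrightarrow> wderiv t (\<lambda>u. a * h1 u + b * h2 u) x = a * wderiv t h1 x + b * wderiv t h2 x"
      using wd_unique[OF cc wc' wc t0] .
    have i1: "set_integrable lborel {0..t} (wderiv t h1)" using w1 by (simp add: weak_deriv_def)
    have i2: "set_integrable lborel {0..t} (wderiv t h2)" using w2 by (simp add: weak_deriv_def)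
    have ic: "set_integrable lborel {0..t} (wderiv t (\<lambda>u. a * h1 u + b * h2 u))" using wc' by (simp add: weak_deriv_def)
    have ic2: "set_integrable lborel {0..t} (\<lambda>u. a * wderiv t h1 u + b * wderiv t h2 u)" using wc by (simp add: weak_deriv_def)
    have "JJ (\<lambda>u. a * h1 u + b * h2 u) s = (LINT u:{0..s}|lborel. left_lim Z u * (a * wderiv t h1 u + b * wderiv t h2 u))"
      unfolding JJ_def using F_cong[OF ic ic2 ae s] .
    also have "\<dots> = a * JJ h1 s + b * JJ h2 s" unfolding JJ_def using F_lin[OF i1 i2 s] .
    finally show ?thesis .
  qed

  have JJbound: "\<bar>JJ h s\<bar> \<le> M * sqrt t" if "h \<in> sobolev t m" "sob_norm t m h \<le> 1" "s \<in> {0..t}" for h s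
  proof -
    have "\<bar>JJ h s - JJ h 0\<bar> \<le> M * sqrt (s - 0)" using facts[OF that(1,2)] that(3) by auto
    also have "\<dots> \<le> M * sqrt t" using that(3) M(1) by (intro mult_left_mono) auto
    finally show ?thesis using JJ0 by simp
  qed

  have P1: "in_dual t m (pw_int t Z s)" if s: "s \<in> {0..t}" for s
    unfolding in_dual_def
  proof (intro conjI ballI allI)
    fix h g a b assume "h \<in> sobolev t m" "g \<in> sobolev t m"
    then show "pw_int t Z s (\<lambda>u. a * h u + b * g u) = a * pw_int t Z s h + b * pw_int t Z s g"
      using JJlin[of h g s a b] s by (simp add: pw algebra_simps)
  next
    have "dual_norm t m (pw_int t Z s) \<le> ereal (Kc * M + Kc * M + M * sqrt t)"
    proof (rule dual_le)
      fix h assume h: "h \<in> sobolev t m" "sob_norm t m h \<le> 1"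
      have hb: "\<forall>x\<in>{0..t}. \<bar>h x\<bar> \<le> Kc" using facts[OF h] by blast
      have "\<bar>h s * Z s\<bar> \<le> Kc * M" using hb M s by (intro prod_bound) auto
      moreover have "\<bar>h 0 * Z 0\<bar> \<le> Kc * M" using hb M t0 by (intro prod_bound) auto
      moreover have "\<bar>JJ h s\<bar> \<le> M * sqrt t" using JJbound[OF h s] .
      ultimately show "\<bar>pw_int t Z s h\<bar> \<le> Kc * M + Kc * M + M * sqrt t" unfolding pw by linarith
    qed
    then show "dual_norm t m (pw_int t Z s) < \<infinity>" by (rule le_less_trans) simp
  qed

  have P3: "in_dual t m (pw_int_left t Z s)" if s: "s \<in> {0<..t}" for s
    unfolding in_dual_def
  proof (intro conjI ballI allI)
    fix h g a b assume "h \<in> sobolev t m" "g \<in> sobolev t m"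
    then show "pw_int_left t Z s (\<lambda>u. a * h u + b * g u) = a * pw_int_left t Z s h + b * pw_int_left t Z s g"
      using JJlin[of h g s a b] s by (simp add: pwl algebra_simps)
  next
    have "dual_norm t m (pw_int_left t Z s) \<le> ereal (Kc * M + Kc * M + M * sqrt t)"
    proof (rule dual_le)
      fix h assume h: "h \<in> sobolev t m" "sob_norm t m h \<le> 1"
      have hb: "\<forall>x\<in>{0..t}. \<bar>h x\<bar> \<le> Kc" using facts[OF h] by blast
      have "\<bar>h s * left_lim Z s\<bar> \<le> Kc * M" using hb M s by (intro prod_bound) auto
      moreover have "\<bar>h 0 * Z 0\<bar> \<le> Kc * M" using hb M t0 by (intro prod_bound) auto
      moreover have "\<bar>JJ h s\<bar> \<le> M * sqrt t" using JJbound[OF h] s by auto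
      ultimately show "\<bar>pw_int_left t Z s h\<bar> \<le> Kc * M + Kc * M + M * sqrt t" unfolding pwl by linarith
    qed
    then show "dual_norm t m (pw_int_left t Z s) < \<infinity>" by (rule le_less_trans) simp
  qed

  have P2: "((\<lambda>\<epsilon>. dual_norm t m (\<lambda>h. pw_int t Z (s + \<epsilon>) h - pw_int t Z s h)) \<longlongrightarrow> (0::ereal)) (at_right (0::real))"
    if s: "s \<in> {0..<t}" for s
  proof (rule dual_lim[OF t0, where \<beta> = "\<lambda>\<epsilon>. M * sqrt \<epsilon> + Kc * \<bar>Z (s + \<epsilon>) - Z s\<bar> + M * sqrt \<epsilon>"])
    have "eventually (\<lambda>\<epsilon>. 0 < \<epsilon> \<and> \<epsilon> < t - s) (at_right (0::real))"
      using s unfolding eventually_at_right_field by (intro exI[of _ "t - s"]) auto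
    then show "eventually (\<lambda>\<epsilon>. \<forall>h. h \<in> sobolev t m \<and> sob_norm t m h \<le> 1 \<longrightarrow>
        \<bar>pw_int t Z (s + \<epsilon>) h - pw_int t Z s h\<bar> \<le> M * sqrt \<epsilon> + Kc * \<bar>Z (s + \<epsilon>) - Z s\<bar> + M * sqrt \<epsilon>) (at_right 0)"
    proof eventually_elim
      case (elim \<epsilon>)
      show ?case
      proof (intro allI impI)
        fix h assume h: "h \<in> sobolev t m \<and> sob_norm t m h \<le> 1"
        note f = facts[OF conjunct1[OF h] conjunct2[OF h]]
        have r: "0 \<le> s" "s \<le> s + \<epsilon>" "s + \<epsilon> \<le> t" using s elim by auto
        have hh: "\<bar>h (s + \<epsilon>) - h s\<bar> \<le> sqrt \<epsilon>"
          using conjunct1[OF conjunct2[OF f], rule_format, of s "s + \<epsilon>"] r by simp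
        have e1: "\<bar>(h (s + \<epsilon>) - h s) * Z (s + \<epsilon>)\<bar> \<le> sqrt \<epsilon> * M"
          using hh r M by (intro prod_bound) auto
        have e2: "\<bar>h s * (Z (s + \<epsilon>) - Z s)\<bar> \<le> Kc * \<bar>Z (s + \<epsilon>) - Z s\<bar>"
          using f r by (intro prod_bound) auto
        have e3: "\<bar>JJ h (s + \<epsilon>) - JJ h s\<bar> \<le> M * sqrt \<epsilon>"
          using conjunct2[OF conjunct2[OF f], rule_format, of s "s + \<epsilon>"] r by simp
        have "pw_int t Z (s + \<epsilon>) h - pw_int t Z s h
            = (h (s + \<epsilon>) - h s) * Z (s + \<epsilon>) + h s * (Z (s + \<epsilon>) - Z s) - (JJ h (s + \<epsilon>) - JJ h s)"
          unfolding pw by (simp add: algebra_simps)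
        then show "\<bar>pw_int t Z (s + \<epsilon>) h - pw_int t Z s h\<bar> \<le> M * sqrt \<epsilon> + Kc * \<bar>Z (s + \<epsilon>) - Z s\<bar> + M * sqrt \<epsilon>"
          using e1 e2 e3 by (simp add: mult.commute; linarith)
      qed
    qed
  next
    have "continuous (at_right s) Z" using assms(3) s by (simp add: cadlag_on_def)
    then have "(Z \<longlongrightarrow> Z s) (at_right s)" by (simp add: continuous_within)
    then have "((\<lambda>\<epsilon>. Z (\<epsilon> + s)) \<longlongrightarrow> Z s) (at_right 0)" by (simp add: filterlim_at_right_to_0[of Z _ s])
    then have "((\<lambda>\<epsilon>. Z (s + \<epsilon>) - Z s) \<longlongrightarrow> 0) (at_right 0)" by (simp add: add.commute LIM_zero)
    then have z: "((\<lambda>\<epsilon>. \<bar>Z (s + \<epsilon>) - Z s\<bar>) \<longlongrightarrow> 0) (at_right 0)" by (rule tendsto_rabs_zero)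
    have "((\<lambda>\<epsilon>. M * sqrt \<epsilon> + Kc * \<bar>Z (s + \<epsilon>) - Z s\<bar> + M * sqrt \<epsilon>) \<longlongrightarrow> 0 + 0 + 0) (at_right 0)"
      by (intro tendsto_add tendsto_mult_right_zero sqrt_at_right z)
    then show "((\<lambda>\<epsilon>. M * sqrt \<epsilon> + Kc * \<bar>Z (s + \<epsilon>) - Z s\<bar> + M * sqrt \<epsilon>) \<longlongrightarrow> 0) (at_right 0)"
      by simp
  qed

  have P4: "((\<lambda>\<epsilon>. dual_norm t m (\<lambda>h. pw_int t Z (s - \<epsilon>) h - pw_int_left t Z s h)) \<longlongrightarrow> (0::ereal)) (at_right (0::real))"
    if s: "s \<in> {0<..t}" for s
  proof (rule dual_lim[OF t0, where \<beta> = "\<lambda>\<epsilon>. M * sqrt \<epsilon> + Kc * \<bar>Z (s - \<epsilon>) - left_lim Z s\<bar> + M * sqrt \<epsilon>"])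
    have "eventually (\<lambda>\<epsilon>. 0 < \<epsilon> \<and> \<epsilon> < s) (at_right (0::real))"
      using s unfolding eventually_at_right_field by (intro exI[of _ s]) auto
    then show "eventually (\<lambda>\<epsilon>. \<forall>h. h \<in> sobolev t m \<and> sob_norm t m h \<le> 1 \<longrightarrow>
        \<bar>pw_int t Z (s - \<epsilon>) h - pw_int_left t Z s h\<bar> \<le> M * sqrt \<epsilon> + Kc * \<bar>Z (s - \<epsilon>) - left_lim Z s\<bar> + M * sqrt \<epsilon>) (at_right 0)"
    proof eventually_elim
      case (elim \<epsilon>)
      show ?case
      proof (intro allI impI)
        fix h assume h: "h \<in> sobolev t m \<and> sob_norm t m h \<le> 1"
        note f = facts[OF conjunct1[OF h] conjunct2[OF h]]
        have r: "0 \<le> s - \<epsilon>" "s - \<epsilon> \<le> s" "s \<le> t" using s elim by auto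
        have e1: "\<bar>(h s - h (s - \<epsilon>)) * Z (s - \<epsilon>)\<bar> \<le> sqrt \<epsilon> * M"
        proof (rule prod_bound)
          show "\<bar>h s - h (s - \<epsilon>)\<bar> \<le> sqrt \<epsilon>"
            using conjunct1[OF conjunct2[OF f], rule_format, of "s - \<epsilon>" s] r by simp
          show "\<bar>Z (s - \<epsilon>)\<bar> \<le> M" using M r by auto
        qed
        have e2: "\<bar>h s * (Z (s - \<epsilon>) - left_lim Z s)\<bar> \<le> Kc * \<bar>Z (s - \<epsilon>) - left_lim Z s\<bar>"
          using f r by (intro prod_bound) auto
        have e3: "\<bar>JJ h s - JJ h (s - \<epsilon>)\<bar> \<le> M * sqrt \<epsilon>"
          using conjunct2[OF conjunct2[OF f], rule_format, of "s - \<epsilon>" s] r by simp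
        have "pw_int t Z (s - \<epsilon>) h - pw_int_left t Z s h
            = - ((h s - h (s - \<epsilon>)) * Z (s - \<epsilon>)) + h s * (Z (s - \<epsilon>) - left_lim Z s) + (JJ h s - JJ h (s - \<epsilon>))"
          unfolding pw pwl by (simp add: algebra_simps)
        then show "\<bar>pw_int t Z (s - \<epsilon>) h - pw_int_left t Z s h\<bar> \<le> M * sqrt \<epsilon> + Kc * \<bar>Z (s - \<epsilon>) - left_lim Z s\<bar> + M * sqrt \<epsilon>"
          using e1 e2 e3 by (simp add: mult.commute; linarith)
      qed
    qed
  next
    have "(Z \<longlongrightarrow> left_lim Z s) (at_left s)" using cadlag_left_tendsto[OF assms(3) s] .
    then have "((\<lambda>x. Z (- x)) \<longlongrightarrow> left_lim Z s) (at_right (- s))" by (simp add: filterlim_at_left_to_right)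
    then have "((\<lambda>\<epsilon>. Z (- (\<epsilon> + - s))) \<longlongrightarrow> left_lim Z s) (at_right 0)"
      by (simp add: filterlim_at_right_to_0[of "\<lambda>x. Z (- x)" _ "- s"])
    then have "((\<lambda>\<epsilon>. Z (s - \<epsilon>) - left_lim Z s) \<longlongrightarrow> 0) (at_right 0)" by (simp add: LIM_zero)
    then have z: "((\<lambda>\<epsilon>. \<bar>Z (s - \<epsilon>) - left_lim Z s\<bar>) \<longlongrightarrow> 0) (at_right 0)" by (rule tendsto_rabs_zero)
    have "((\<lambda>\<epsilon>. M * sqrt \<epsilon> + Kc * \<bar>Z (s - \<epsilon>) - left_lim Z s\<bar> + M * sqrt \<epsilon>) \<longlongrightarrow> 0 + 0 + 0) (at_right 0)"
      by (intro tendsto_add tendsto_mult_right_zero sqrt_at_right z)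
    then show "((\<lambda>\<epsilon>. M * sqrt \<epsilon> + Kc * \<bar>Z (s - \<epsilon>) - left_lim Z s\<bar> + M * sqrt \<epsilon>) \<longlongrightarrow> 0) (at_right 0)"
      by simp
  qed

  show ?thesis using P1 P2 P3 P4 by blast
qed


end
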